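(* For all $\ell,n\in\{1,\dots,L+1\}$, $\delta\in\{1,2,3,4\}$, $w\in\mathcal W^{(\ell)}$, $q\in\mathcal W^{(n)}$, \[\big|(\mathcal E^{(\ell,\widehat{\mathbf x}^{(\delta)})}w,\mathcal E^{(n,\widehat{\mathbf x}^{(\delta)})}q)_{H^1(\widehat\Omega)}\big|\lesssim\frac{\min\{\widehat h_\ell,\widehat h_n\}}{\max\{\widehat h_\ell,\widehat h_n\}}\Big(p^{-1}\widehat h_\ell|w|^2_{H^1(\widehat\Gamma^{(\delta)})}+p^{-1}\widehat h_n|q|^2_{H^1(\widehat\Gamma^{(\delta)})}+p\,\widehat h_\ell^{-1}\|w\|^2_{L_2(\widehat\Gamma^{(\delta)})}+p\,\widehat h_n^{-1}\|q\|^2_{L_2(\widehat\Gamma^{(\delta)})}\Big).\]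
   Context: Single-patch parametric setting. $\widehat\Omega=(0,1)^2$, $p\ge1$. For $\delta=1,2$, $\Xi^{(\delta)}$ is a $p$-open knot vector on $[0,1]$ (end knots of multiplicity $p+1$, interior multiplicities in $\{1,\dots,p\}$) with distinct breakpoints satisfying $C_3\widehat h\le\zeta^{(\delta)}_{i+1}-\zeta^{(\delta)}_i\le\widehat h$. $\mathcal V=S[p,\Xi^{(1)}]\otimes S[p,\Xi^{(2)}]$, $\mathcal W=\{v|_{\partial\widehat\Omega}:v\in\mathcal V\}$. $(u,v)_{H^1(\widehat\Omega)}:=\int_{\widehat\Omega}\nabla u\cdot\nabla v$; on a side, $|w|_{H^1}$ is the $L_2$ norm of the tangential derivative. Grid hierarchy: $L\ge1$, $\widehat h_\ell:=4^{L-\ell}\widehat h$; for $\delta=1,2$, $\ell=1,\dots,L$ nested breakpoint vectors $Z^{(\delta,\ell)}$ (containing $0,1$, $Z^{(\delta,L)}$ = breakpoints of $\Xi^{(\delta)}$) with $c_0\widehat h_\ell\le$ consecutive differences $\le\widehat h_\ell$; $\Xi^{(\delta,\ell)}$ the $p$-open knot vector with breakpoints $Z^{(\delta,\ell)}$ and simple interior knots. $\gamma:\mathbb R\to\partial\widehat\Omega$ is the 4-periodic map $\gamma(t)=(0,t)$ on $[0,1)$, $(t-1,1)$ on $[1,2)$, $(1,3-t)$ on $[2,3)$, $(4-t,0)$ on $[3,4)$. For $\ell=1,\dots,L$, $\mathcal W^{(\ell)}=\{w\in(S[p,\Xi^{(1,\ell)}]\otimes S[p,\Xi^{(2,\ell)}])|_{\partial\widehat\Omega}: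 w\circ\gamma\in C^{p-1}(\mathbb R)\}$, $\mathcal W^{(L+1)}=\mathcal W$. Sides $\widehat\Gamma^{(\delta)}=\gamma((\delta-1,\delta))$ and vertices $\widehat{\mathbf x}^{(\delta)}=\gamma(\delta-1)$, $\delta=1,\dots,4$; the sides adjacent to $\widehat{\mathbf x}^{(\delta)}$ are $\widehat\Gamma^{(\delta-1)}$ and $\widehat\Gamma^{(\delta)}$ (with $\widehat\Gamma^{(0)}:=\widehat\Gamma^{(4)}$). For each side $\widehat\Gamma^{(\delta)}$ and level $\ell$, $\eta$ is the largest breakpoint (in the direction transversal to the side, of the fine knot vector) not exceeding $\max\{\widehat h_\ell,\text{smallest positive breakpoint}\}$, and $\theta^{(\ell,\widehat\Gamma^{(\delta)})}=\max\{0,1-d/\eta\}^p$ with $d$ the distance to the side. The vertex extension is $\mathcal E^{(\ell,\widehat{\mathbf x}^{(\delta)})}w=w(\widehat{\mathbf x}^{(\delta)})\,\theta^{(\ell,\widehat\Gamma^{(\delta-1)})}\,\theta^{(\ell,\widehat\Gamma^{(\delta)})}$; e.g. for $\widehat{\mathbf x}^{(1)}=(0,0)$: $w(0,0)\max\{0,1-x/\eta_1\}^p\max\{0,1-y/\eta_2\}^p$. $a\lesssim b$ means $a\le cb$ with $c$ depending only on $C_3,c_0$. *)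

theory Defs
  imports "HOL-Analysis.Analysis" "HOL-Computational_Algebra.Polynomial"
begin

definition consec :: "real set \<Rightarrow> real \<Rightarrow> real \<Rightarrow> bool" where
  "consec Z a b \<longleftrightarrow> a \<in> Z \<and> b \<in> Z \<and> a < b \<and> (\<forall>z\<in>Z. \<not> (a < z \<and> z < b))"

definition breakpoints_ok :: "real set \<Rightarrow> real \<Rightarrow> real \<Rightarrow> bool" where
  "breakpoints_ok Z lo hi \<longleftrightarrow> finite Z \<and> 0 \<in> Z \<and> 1 \<in> Z \<and> Z \<subseteq> {0..1} \<and>
     (\<forall>a b. consec Z a b \<longrightarrow> lo \<le> b - a \<and> b - a \<le> hi)"

(* p-open knot vector: interior multiplicities in {1..p} (end knots have multiplicity p+1 implicitly) *)
definition mult_ok :: "nat \<Rightarrow> real set \<Rightarrow> (real \<Rightarrow> nat) \<Rightarrow> bool" where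
  "mult_ok p Z m \<longleftrightarrow> (\<forall>z\<in>Z. 0 < z \<and> z < 1 \<longrightarrow> 1 \<le> m z \<and> m z \<le> p)"

(* S[p,Xi]: piecewise polynomials of degree <= p on the breakpoint intervals,
   C^(p - m) at an interior breakpoint of multiplicity m.  Only values on [0,1] matter. *)
definition spline_space :: "nat \<Rightarrow> real set \<Rightarrow> (real \<Rightarrow> nat) \<Rightarrow> (real \<Rightarrow> real) set" where
  "spline_space p Z m = {f. \<exists>P :: real \<Rightarrow> real poly.
      (\<forall>a\<in>Z. degree (P a) \<le> p) \<and>
      (\<forall>a b. consec Z a b \<longrightarrow> (\<forall>x\<in>{a..b}. f x = poly (P a) x)) \<and>
      (\<forall>a b c. consec Z a b \<and> consec Z b c \<longrightarrow>
          (\<forall>j \<le> p - m b. poly ((pderiv ^^ j) (P a)) b = poly ((pderiv ^^ j) (P b)) b))}"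

definition tensor_space :: "(real \<Rightarrow> real) set \<Rightarrow> (real \<Rightarrow> real) set \<Rightarrow> (real \<times> real \<Rightarrow> real) set" where
  "tensor_space S1 S2 = {u. \<exists>(k::nat) f g. (\<forall>i<k. f i \<in> S1 \<and> g i \<in> S2) \<and>
      (\<forall>x y. u (x, y) = (\<Sum>i<k. f i x * g i y))}"

(* the 4-periodic parametrization of the boundary of the unit square *)
definition gamma :: "real \<Rightarrow> real \<times> real" where
  "gamma t = (let s = t - 4 * of_int \<lfloor>t / 4\<rfloor> in
     if s < 1 then (0, s) else if s < 2 then (s - 1, 1) else if s < 3 then (1, 3 - s) else (4 - s, 0))"

(* traces on the boundary; only values on the boundary are relevant *)
definition trace_space :: "(real \<times> real \<Rightarrow> real) set \<Rightarrow> (real \<times> real \<Rightarrow> real) set" where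
  "trace_space V = {w. \<exists>v\<in>V. \<forall>t. w (gamma t) = v (gamma t)}"

definition Ck :: "nat \<Rightarrow> (real \<Rightarrow> real) \<Rightarrow> bool" where
  "Ck k f \<longleftrightarrow> (\<exists>D :: nat \<Rightarrow> real \<Rightarrow> real. D 0 = f \<and>
      (\<forall>j<k. \<forall>x. (D j has_real_derivative D (Suc j) x) (at x)) \<and> continuous_on UNIV (D k))"

definition hlev :: "nat \<Rightarrow> real \<Rightarrow> nat \<Rightarrow> real" where
  "hlev L hh l = 4 powr (real L - real l) * hh"

(* W^(l); Zc d l = Z^(d,l), fine breakpoints Zc d L, fine multiplicities mf d *)
definition Wlev :: "nat \<Rightarrow> nat \<Rightarrow> (nat \<Rightarrow> nat \<Rightarrow> real set) \<Rightarrow> (nat \<Rightarrow> real \<Rightarrow> nat) \<Rightarrow> nat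
    \<Rightarrow> (real \<times> real \<Rightarrow> real) set" where
  "Wlev p L Zc mf l =
     (if l = L + 1 then trace_space (tensor_space (spline_space p (Zc 1 L) (mf 1)) (spline_space p (Zc 2 L) (mf 2)))
      else {w \<in> trace_space (tensor_space (spline_space p (Zc 1 l) (\<lambda>_. 1)) (spline_space p (Zc 2 l) (\<lambda>_. 1))).
              Ck (p - 1) (w \<circ> gamma)})"

definition side_dist :: "nat \<Rightarrow> real \<times> real \<Rightarrow> real" where
  "side_dist d z = (if d = 1 then fst z else if d = 2 then 1 - snd z else if d = 3 then 1 - fst z else snd z)"

(* breakpoints of the fine knot vector transversal to side d, measured as distances to that side *)
definition trans_dists :: "(nat \<Rightarrow> real set) \<Rightarrow> nat \<Rightarrow> real set" where
  "trans_dists Zf d = (if d = 1 then Zf 1 else if d = 2 then (\<lambda>z. 1 - z) ` Zf 2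
      else if d = 3 then (\<lambda>z. 1 - z) ` Zf 1 else Zf 2)"

definition eta :: "(nat \<Rightarrow> real set) \<Rightarrow> nat \<Rightarrow> real \<Rightarrow> real" where
  "eta Zf d h = (let D = trans_dists Zf d in Max {e \<in> D. e \<le> max h (Min {e \<in> D. 0 < e})})"

definition theta :: "nat \<Rightarrow> (nat \<Rightarrow> real set) \<Rightarrow> real \<Rightarrow> nat \<Rightarrow> real \<times> real \<Rightarrow> real" where
  "theta p Zf h d z = (max 0 (1 - side_dist d z / eta Zf d h)) ^ p"

definition prev_side :: "nat \<Rightarrow> nat" where
  "prev_side d = (if d = 1 then 4 else d - 1)"

(* vertex extension E^(l, x^(d)) w, with h = hat h_l *)
definition vext :: "nat \<Rightarrow> (nat \<Rightarrow> real set) \<Rightarrow> real \<Rightarrow> nat \<Rightarrow> (real \<times> real \<Rightarrow> real) \<Rightarrow> real \<times> real \<Rightarrow> real" where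
  "vext p Zf h d w z = w (gamma (real d - 1)) * theta p Zf h (prev_side d) z * theta p Zf h d z"

definition pdx :: "(real \<times> real \<Rightarrow> real) \<Rightarrow> real \<times> real \<Rightarrow> real" where
  "pdx u z = deriv (\<lambda>t. u (t, snd z)) (fst z)"

definition pdy :: "(real \<times> real \<Rightarrow> real) \<Rightarrow> real \<times> real \<Rightarrow> real" where
  "pdy u z = deriv (\<lambda>t. u (fst z, t)) (snd z)"

definition h1_inner :: "(real \<times> real \<Rightarrow> real) \<Rightarrow> (real \<times> real \<Rightarrow> real) \<Rightarrow> real" where
  "h1_inner u v = integral (cbox (0, 0) (1, 1)) (\<lambda>z. pdx u z * pdx v z + pdy u z * pdy v z)"

(* ||w||^2_{L2(Gamma^(d))} and |w|^2_{H1(Gamma^(d))} via the unit-speed parametrization gamma *)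
definition side_L2sq :: "nat \<Rightarrow> (real \<times> real \<Rightarrow> real) \<Rightarrow> real" where
  "side_L2sq d w = integral {real d - 1 .. real d} (\<lambda>t. (w (gamma t))\<^sup>2)"

definition side_H1sq :: "nat \<Rightarrow> (real \<times> real \<Rightarrow> real) \<Rightarrow> real" where
  "side_H1sq d w = integral {real d - 1 .. real d} (\<lambda>t. (deriv (\<lambda>s. w (gamma s)) t)\<^sup>2)"

end

theory Submission
  imports Defs
begin

lemma CS_int:
  fixes f :: "real \<Rightarrow> real"
  assumes fi: "f integrable_on {a..b}" and f2: "(\<lambda>x. (f x)^2) integrable_on {a..b}" and ab: "a \<le> b"
  shows "(integral {a..b} f)^2 \<le> (b-a) * integral {a..b} (\<lambda>x. (f x)^2)"
proof (cases "a = b")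
  case True then show ?thesis by simp
next
  case False
  with ab have ab': "a < b" by simp
  define I where "I = integral {a..b} f"
  define c where "c = I / (b - a)"
  have eqf: "(\<lambda>x. (f x - c)^2) = (\<lambda>x. (f x)^2 - (2*c) * f x + c^2)"
    by (simp add: power2_eq_square algebra_simps)
  have "(\<lambda>x. (f x)^2 - (2*c) * f x + c^2) integrable_on {a..b}"
    using fi f2 by (intro integrable_add integrable_diff integrable_on_mult_right) auto
  then have int: "(\<lambda>x. (f x - c)^2) integrable_on {a..b}" by (simp only: eqf)
  have "0 \<le> integral {a..b} (\<lambda>x. (f x - c)^2)"
    using int by (rule integral_nonneg) auto
  also have "integral {a..b} (\<lambda>x. (f x - c)^2) = integral {a..b} (\<lambda>x. (f x)^2 - (2*c) * f x + c^2)"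
    by (simp add: power2_eq_square algebra_simps)
  also have "\<dots> = integral {a..b} (\<lambda>x. (f x)^2) - (2*c) * I + (b-a) * c^2"
  proof -
    have i1: "(\<lambda>x. (f x)^2 - (2*c) * f x) integrable_on {a..b}"
      using fi f2 by (intro integrable_diff integrable_on_mult_right) auto
    have "integral {a..b} (\<lambda>x. (f x)^2 - (2*c) * f x + c^2) = integral {a..b} (\<lambda>x. (f x)^2 - (2*c) * f x) + integral {a..b} (\<lambda>x. c^2)"
      using i1 by (intro integral_add) auto
    also have "integral {a..b} (\<lambda>x. (f x)^2 - (2*c) * f x) = integral {a..b} (\<lambda>x. (f x)^2) - integral {a..b} (\<lambda>x. (2*c) * f x)"
      using fi f2 by (intro integral_diff integrable_on_mult_right) auto
    also have "integral {a..b} (\<lambda>x. (2*c) * f x) = (2*c) * I"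
      unfolding I_def by simp
    finally show ?thesis using ab by simp
  qed
  finally have "0 \<le> integral {a..b} (\<lambda>x. (f x)^2) - (2*c) * I + (b-a) * c^2" .
  then have "0 \<le> (b-a) * (integral {a..b} (\<lambda>x. (f x)^2) - (2*c) * I + (b-a) * c^2)"
    using ab' by simp
  also have "(b-a) * (integral {a..b} (\<lambda>x. (f x)^2) - (2*c) * I + (b-a) * c^2) = (b-a) * integral {a..b} (\<lambda>x. (f x)^2) - 2*((b-a)*c)*I + ((b-a)*c)^2"
    by (simp add: algebra_simps power2_eq_square)
  also have "(b-a)*c = I" using ab' unfolding c_def by simp
  also have "(b-a) * integral {a..b} (\<lambda>x. (f x)^2) - 2*I*I + I^2 = (b-a) * integral {a..b} (\<lambda>x. (f x)^2) - I^2"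
    by (simp add: power2_eq_square)
  finally show ?thesis unfolding I_def by simp
qed

definition PW :: "real \<Rightarrow> real \<Rightarrow> (real \<Rightarrow> real) \<Rightarrow> bool" where
  "PW a b f \<longleftrightarrow> continuous_on {a..b} f \<and>
     (\<exists>S B. finite S \<and> (\<forall>x\<in>{a<..<b}-S. \<exists>D. (f has_real_derivative D) (at x) \<and> \<bar>D\<bar> \<le> B))"

lemma sq_ineq: "(v::real)^2 \<le> 2 * u^2 + 2 * (u - v)^2"
proof -
  have "0 \<le> (2*u - v)^2" by simp
  then show ?thesis by (simp add: power2_eq_square algebra_simps)
qed

lemma trace1:
  fixes g :: "real \<Rightarrow> real"
  assumes pw: "PW a (a+1) g" and e: "0 < e" "e \<le> 1"
  shows "e * (g a)^2 \<le> 2 * integral {a..a+1} (\<lambda>t. (g t)^2) + 2 * e^2 * integral {a..a+1} (\<lambda>t. (deriv g t)^2)"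
proof -
  from pw obtain S B where cont: "continuous_on {a..a+1} g" and finS: "finite S"
    and dS: "\<And>x. x\<in>{a<..<a+1}-S \<Longrightarrow> \<exists>D. (g has_real_derivative D) (at x) \<and> \<bar>D\<bar> \<le> B"
    unfolding PW_def by blast
  have dg: "(g has_real_derivative deriv g x) (at x)" "\<bar>deriv g x\<bar> \<le> B" if "x\<in>{a<..<a+1}-S" for x
    using dS[OF that] DERIV_imp_deriv by metis+
  have ftc: "(deriv g has_integral (g x - g a)) {a..x}" if "x \<in> {a..a+1}" for x
  proof (rule fundamental_theorem_of_calculus_interior_strong[OF finS])
    show "a \<le> x" using that by simp
    show "(g has_vector_derivative deriv g t) (at t)" if "t \<in> {a<..<x} - S" for t
      using dg(1)[of t] that \<open>x \<in> {a..a+1}\<close> by (auto simp: has_real_derivative_iff_has_vector_derivative)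
    show "continuous_on {a..x} g" using continuous_on_subset[OF cont, of "{a..x}"] that by auto
  qed
  have gi: "deriv g integrable_on {a..a+1}" using ftc[of "a+1"] by auto
  have meas: "(\<lambda>t. (deriv g t)^2) \<in> borel_measurable (lebesgue_on {a..a+1})"
    using integrable_imp_measurable[OF gi] by measurable
  define S' where "S' = S \<union> {a, a+1}"
  have finS': "finite S'" using finS unfolding S'_def by simp
  define G where "G t = (if t \<in> S' then (deriv g t)^2 else B^2)" for t
  have Gi: "G integrable_on {a..a+1}"
    by (rule integrable_spike[of "\<lambda>t. B^2" _ S']) (auto simp: G_def finS' negligible_finite)
  have g2i: "(\<lambda>t. (deriv g t)^2) integrable_on {a..a+1}"
  proof (rule measurable_bounded_by_integrable_imp_integrable_real[OF meas Gi])
    show "\<bar>(deriv g t)^2\<bar> \<le> G t" if "t \<in> {a..a+1}" for t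
    proof (cases "t \<in> S'")
      case False
      then have "t \<in> {a<..<a+1}-S" using that unfolding S'_def by auto
      then have "\<bar>deriv g t\<bar> \<le> B" by (rule dg)
      then have "(deriv g t)^2 \<le> B^2" by (metis abs_ge_zero order_trans power2_abs power_mono)
      then show ?thesis using False by (simp add: G_def)
    qed (simp add: G_def)
  qed auto
  define H where "H = integral {a..a+1} (\<lambda>t. (deriv g t)^2)"
  have H0: "0 \<le> H" unfolding H_def using g2i by (rule integral_nonneg) auto
  have pt: "(g a)^2 \<le> 2 * (g x)^2 + 2 * e * H" if x: "x \<in> {a..a+e}" for x
  proof -
    have xa: "x \<in> {a..a+1}" using x e by auto
    have "(g x - g a)^2 = (integral {a..x} (deriv g))^2" using ftc[OF xa] by (simp add: integral_unique)
    also have "\<dots> \<le> (x - a) * integral {a..x} (\<lambda>t. (deriv g t)^2)"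
      by (rule CS_int) (use xa integrable_on_subinterval[OF gi] integrable_on_subinterval[OF g2i] in auto)
    also have "\<dots> \<le> e * H"
    proof (rule mult_mono)
      show "integral {a..x} (\<lambda>t. (deriv g t)^2) \<le> H" unfolding H_def
        by (rule integral_subset_le) (use xa integrable_on_subinterval[OF g2i] g2i in auto)
    next
      show "0 \<le> integral {a..x} (\<lambda>t. (deriv g t)^2)"
        by (rule integral_nonneg) (use xa integrable_on_subinterval[OF g2i, of a x] in auto)
    qed (use x H0 in auto)
    finally have "(g x - g a)^2 \<le> e * H" .
    moreover have "(g a)^2 \<le> 2 * (g x)^2 + 2 * (g x - g a)^2"
      using sq_ineq[of "g a" "g x"] .
    ultimately show ?thesis by simp
  qed
  have ci: "(\<lambda>t. (g t)^2) integrable_on {a..a+1}"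
    by (rule integrable_continuous_interval) (intro continuous_intros cont)
  have "e * (g a)^2 = integral {a..a+e} (\<lambda>x. (g a)^2)" using e by simp
  also have "\<dots> \<le> integral {a..a+e} (\<lambda>x. 2 * (g x)^2 + 2 * e * H)"
    by (rule integral_le) (use pt e integrable_on_subinterval[OF ci, of a "a+e"] in \<open>auto intro!: integrable_add integrable_on_mult_right\<close>)
  also have "\<dots> = 2 * integral {a..a+e} (\<lambda>x. (g x)^2) + e * (2 * e * H)"
    using e integrable_on_subinterval[OF ci, of a "a+e"] by (subst integral_add) auto
  finally have 1: "e * (g a)^2 \<le> 2 * integral {a..a+e} (\<lambda>x. (g x)^2) + e * (2 * e * H)" .
  have "integral {a..a+e} (\<lambda>x. (g x)^2) \<le> integral {a..a+1} (\<lambda>t. (g t)^2)"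
    by (rule integral_subset_le) (use e ci integrable_on_subinterval[OF ci, of a "a+e"] in auto)
  with 1 show ?thesis unfolding H_def by (simp add: power2_eq_square)
qed

lemma PW_zero: "PW a b (\<lambda>x. 0)"
  unfolding PW_def by (auto intro!: exI[of _ "{}"] exI[of _ 0] exI[of _ "0::real"])

lemma PW_cmul: assumes "PW a b f" shows "PW a b (\<lambda>x. c * f x)"
proof -
  from assms obtain S B where c: "continuous_on {a..b} f" and S: "finite S"
    and d: "\<And>x. x\<in>{a<..<b}-S \<Longrightarrow> \<exists>D. (f has_real_derivative D) (at x) \<and> \<bar>D\<bar> \<le> B"
    unfolding PW_def by blast
  have "\<exists>D. ((\<lambda>x. c * f x) has_real_derivative D) (at x) \<and> \<bar>D\<bar> \<le> \<bar>c\<bar> * B" if "x\<in>{a<..<b}-S" for x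
  proof -
    from d[OF that] obtain D where "(f has_real_derivative D) (at x)" "\<bar>D\<bar> \<le> B" by blast
    then show ?thesis
      by (intro exI[of _ "c * D"]) (auto intro: DERIV_cmult simp: abs_mult mult_left_mono)
  qed
  then show ?thesis unfolding PW_def using c S by (blast intro: continuous_on_mult_left)
qed

lemma PW_add: assumes "PW a b f" "PW a b g" shows "PW a b (\<lambda>x. f x + g x)"
proof -
  from assms(1) obtain S B where c: "continuous_on {a..b} f" and S: "finite S"
    and d: "\<And>x. x\<in>{a<..<b}-S \<Longrightarrow> \<exists>D. (f has_real_derivative D) (at x) \<and> \<bar>D\<bar> \<le> B"
    unfolding PW_def by blast
  from assms(2) obtain S' B' where c': "continuous_on {a..b} g" and S': "finite S'"
    and d': "\<And>x. x\<in>{a<..<b}-S' \<Longrightarrow> \<exists>D. (g has_real_derivative D) (at x) \<and> \<bar>D\<bar> \<le> B'"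
    unfolding PW_def by blast
  have "\<exists>D. ((\<lambda>x. f x + g x) has_real_derivative D) (at x) \<and> \<bar>D\<bar> \<le> B + B'" if "x\<in>{a<..<b}-(S \<union> S')" for x
  proof -
    from d[of x] d'[of x] that obtain D D' where "(f has_real_derivative D) (at x)" "\<bar>D\<bar> \<le> B"
       "(g has_real_derivative D') (at x)" "\<bar>D'\<bar> \<le> B'" by blast
    then show ?thesis
      by (intro exI[of _ "D + D'"]) (auto intro: DERIV_add)
  qed
  then show ?thesis unfolding PW_def using c c' S S'
    by (intro conjI continuous_on_add exI[of _ "S \<union> S'"] exI[of _ "B + B'"]) auto
qed

lemma PW_sum: fixes k :: nat assumes "\<And>i. i < k \<Longrightarrow> PW a b (F i)" shows "PW a b (\<lambda>x. \<Sum>i<k. F i x)"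
  using assms
proof (induction k)
  case 0 then show ?case using PW_zero by simp
next
  case (Suc k) then show ?case by (simp add: PW_add)
qed

lemma PW_eq: assumes "PW a b h" "\<And>t. t \<in> {a..b} \<Longrightarrow> g t = h t" shows "PW a b g"
proof -
  from assms(1) obtain S B where c: "continuous_on {a..b} h" and S: "finite S"
    and d: "\<And>x. x\<in>{a<..<b}-S \<Longrightarrow> \<exists>D. (h has_real_derivative D) (at x) \<and> \<bar>D\<bar> \<le> B"
    unfolding PW_def by blast
  have "continuous_on {a..b} g" using c assms(2) continuous_on_eq by metis
  moreover have "\<exists>D. (g has_real_derivative D) (at x) \<and> \<bar>D\<bar> \<le> B" if "x\<in>{a<..<b}-S" for x
  proof -
    from d[OF that] obtain D where D: "(h has_real_derivative D) (at x)" "\<bar>D\<bar> \<le> B" by blast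
    have "(g has_real_derivative D) (at x)"
      by (rule has_field_derivative_transform_within_open[OF D(1), of "{a<..<b}"]) (use that assms(2) in auto)
    with D show ?thesis by blast
  qed
  ultimately show ?thesis unfolding PW_def using S by blast
qed

lemma PW_shift: assumes "PW 0 1 f" shows "PW c (c+1) (\<lambda>t. f (t - c))"
proof -
  from assms obtain S B where cf: "continuous_on {0..1} f" and S: "finite S"
    and d: "\<And>x. x\<in>{0<..<1}-S \<Longrightarrow> \<exists>D. (f has_real_derivative D) (at x) \<and> \<bar>D\<bar> \<le> B"
    unfolding PW_def by blast
  have "continuous_on {c..c+1} (\<lambda>t. f (t - c))"
    by (rule continuous_on_compose2[OF cf]) (auto intro!: continuous_intros)
  moreover have "\<exists>D. ((\<lambda>t. f (t - c)) has_real_derivative D) (at x) \<and> \<bar>D\<bar> \<le> B" if "x\<in>{c<..<c+1}-(\<lambda>s. s + c) ` S" for x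
  proof -
    have "x - c \<in> {0<..<1}-S" using that by force
    from d[OF this] obtain D where D: "(f has_real_derivative D) (at (x - c))" "\<bar>D\<bar> \<le> B" by blast
    have "((\<lambda>t. f (t - c)) has_real_derivative D * 1) (at x)"
      by (rule DERIV_chain2[where g="\<lambda>t. t - c", OF D(1)]) (auto intro!: derivative_eq_intros)
    with D show ?thesis by auto
  qed
  ultimately show ?thesis unfolding PW_def using S by blast
qed

lemma PW_refl: assumes "PW 0 1 f" shows "PW c (c+1) (\<lambda>t. f (c + 1 - t))"
proof -
  from assms obtain S B where cf: "continuous_on {0..1} f" and S: "finite S"
    and d: "\<And>x. x\<in>{0<..<1}-S \<Longrightarrow> \<exists>D. (f has_real_derivative D) (at x) \<and> \<bar>D\<bar> \<le> B"
    unfolding PW_def by blast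
  have "continuous_on {c..c+1} (\<lambda>t. f (c + 1 - t))"
    by (rule continuous_on_compose2[OF cf]) (auto intro!: continuous_intros)
  moreover have "\<exists>D. ((\<lambda>t. f (c + 1 - t)) has_real_derivative D) (at x) \<and> \<bar>D\<bar> \<le> B" if "x\<in>{c<..<c+1}-(\<lambda>s. c + 1 - s) ` S" for x
  proof -
    have "c + 1 - x \<in> {0<..<1}-S" using that by force
    from d[OF this] obtain D where D: "(f has_real_derivative D) (at (c + 1 - x))" "\<bar>D\<bar> \<le> B" by blast
    have "((\<lambda>t. f (c + 1 - t)) has_real_derivative D * (-1)) (at x)"
      by (rule DERIV_chain2[where g="\<lambda>t. c + 1 - t", OF D(1)]) (auto intro!: derivative_eq_intros)
    with D show ?thesis by auto
  qed
  ultimately show ?thesis unfolding PW_def using S by blast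
qed

lemma poly_bounded01: "\<exists>B. \<forall>x\<in>{0..1}. \<bar>poly q x\<bar> \<le> (B::real)"
proof -
  have "compact (poly q ` {0..1::real})"
    by (rule compact_continuous_image) (auto intro: continuous_intros)
  then obtain B where "\<forall>y\<in>poly q ` {0..1::real}. norm y \<le> B"
    using compact_imp_bounded bounded_iff by metis
  then show ?thesis by auto
qed

lemma cover_consec:
  assumes fin: "finite Z" and Z: "0 \<in> Z" "1 \<in> Z" "Z \<subseteq> {0..1}" and x: "x \<in> {0..1}"
  shows "\<exists>a b. consec Z a b \<and> a \<le> x \<and> x \<le> b \<and> (x \<notin> Z \<longrightarrow> a < x \<and> x < b)"
proof (cases "x < 1")
  case True
  define A where "A = {z\<in>Z. z \<le> x}"
  define Bs where "Bs = {z\<in>Z. x < z}"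
  have A: "finite A" "A \<noteq> {}" using fin Z x unfolding A_def by auto
  have B: "finite Bs" "Bs \<noteq> {}" using fin Z True unfolding Bs_def by auto
  define a where "a = Max A"
  define b where "b = Min Bs"
  have a: "a \<in> Z" "a \<le> x" using Max_in[OF A] unfolding a_def A_def by auto
  have b: "b \<in> Z" "x < b" using Min_in[OF B] unfolding b_def Bs_def by auto
  have "consec Z a b" unfolding consec_def
  proof (intro conjI ballI)
    show "a < b" using a b by simp
    fix z assume "z \<in> Z"
    show "\<not> (a < z \<and> z < b)"
    proof
      assume az: "a < z \<and> z < b"
      show False
      proof (cases "z \<le> x")
        case True then have "z \<le> a" using Max_ge[OF A(1)] \<open>z \<in> Z\<close> unfolding a_def A_def by auto
        with az show False by simp
      next
        case False then have "b \<le> z" using Min_le[OF B(1)] \<open>z \<in> Z\<close> unfolding b_def Bs_def by auto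
        with az show False by simp
      qed
    qed
  qed (use a b in auto)
  moreover have "x \<notin> Z \<longrightarrow> a < x" using a by (auto simp: le_less)
  ultimately show ?thesis using a b by (intro exI[of _ a] exI[of _ b]) auto
next
  case False
  then have x1: "x = 1" using x by auto
  define A where "A = {z\<in>Z. z < 1}"
  have A: "finite A" "A \<noteq> {}" using fin Z unfolding A_def by auto
  define a where "a = Max A"
  have a: "a \<in> Z" "a < 1" using Max_in[OF A] unfolding a_def A_def by auto
  have "consec Z a 1" unfolding consec_def
  proof (intro conjI ballI)
    fix z assume "z \<in> Z"
    show "\<not> (a < z \<and> z < 1)"
    proof
      assume az: "a < z \<and> z < 1"
      then have "z \<le> a" using Max_ge[OF A(1)] \<open>z \<in> Z\<close> unfolding a_def A_def by auto
      with az show False by simp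
    qed
  qed (use a Z in auto)
  then show ?thesis using a x1 Z by (intro exI[of _ a] exI[of _ 1]) auto
qed

lemma spline_PW:
  assumes fin: "finite Z" and Z: "0 \<in> Z" "1 \<in> Z" "Z \<subseteq> {0..1}" and s: "s \<in> spline_space p Z m"
  shows "PW 0 1 s"
proof -
  from s obtain P :: "real \<Rightarrow> real poly" where
    P: "\<And>a b x. consec Z a b \<Longrightarrow> x \<in> {a..b} \<Longrightarrow> s x = poly (P a) x"
    unfolding spline_space_def by blast
  define I where "I = {ab \<in> Z \<times> Z. consec Z (fst ab) (snd ab)}"
  have finI: "finite I" unfolding I_def using fin by (auto intro: finite_subset[of _ "Z \<times> Z"])
  have "continuous_on (\<Union>ab\<in>I. {fst ab..snd ab}) s"
  proof (rule continuous_on_closed_Union[OF finI])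
    fix ab assume "ab \<in> I"
    then have c: "consec Z (fst ab) (snd ab)" unfolding I_def by auto
    have "continuous_on {fst ab..snd ab} (poly (P (fst ab)))" by (auto intro: continuous_intros)
    then show "continuous_on {fst ab..snd ab} s"
      using P[OF c] continuous_on_eq by metis
  qed auto
  moreover have "{0..1} \<subseteq> (\<Union>ab\<in>I. {fst ab..snd ab})"
  proof
    fix x :: real assume "x \<in> {0..1}"
    from cover_consec[OF fin Z this] obtain a b where "consec Z a b" "a \<le> x" "x \<le> b" by blast
    then show "x \<in> (\<Union>ab\<in>I. {fst ab..snd ab})" unfolding I_def consec_def
      by (intro UN_I[of "(a,b)"]) (auto simp: consec_def)
  qed
  ultimately have cont: "continuous_on {0..1} s" by (rule continuous_on_subset)
  have "\<exists>B. \<forall>x\<in>{0..1}. \<bar>poly (pderiv (P a)) x\<bar> \<le> B" for a by (rule poly_bounded01)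
  then obtain Bf where Bf: "\<And>a x. x\<in>{0..1} \<Longrightarrow> \<bar>poly (pderiv (P a)) x\<bar> \<le> Bf a" by metis
  define B where "B = (\<Sum>a\<in>Z. \<bar>Bf a\<bar>)"
  have "\<exists>D. (s has_real_derivative D) (at x) \<and> \<bar>D\<bar> \<le> B" if x: "x \<in> {0<..<1} - Z" for x
  proof -
    from cover_consec[OF fin Z, of x] x obtain a b where ab: "consec Z a b" "a < x" "x < b" by auto
    have "(s has_real_derivative poly (pderiv (P a)) x) (at x)"
      by (rule has_field_derivative_transform_within_open[OF poly_DERIV, where S="{a<..<b}"])
         (use ab P[OF ab(1)] in auto)
    moreover have "\<bar>poly (pderiv (P a)) x\<bar> \<le> B"
    proof -
      have "a \<in> Z" using ab unfolding consec_def by auto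
      have "\<bar>poly (pderiv (P a)) x\<bar> \<le> Bf a" using Bf x by auto
      also have "\<dots> \<le> \<bar>Bf a\<bar>" by simp
      also have "\<dots> \<le> B" unfolding B_def using \<open>a \<in> Z\<close> fin by (intro member_le_sum) auto
      finally show ?thesis .
    qed
    ultimately show ?thesis by blast
  qed
  then show ?thesis unfolding PW_def using cont fin by blast
qed

lemma gamma_side:
  assumes d: "d \<in> {1..4::nat}" and t: "t \<in> {real d - 1 .. real d}"
  shows "gamma t = (if d = 1 then (0, t) else if d = 2 then (t - 1, 1) else if d = 3 then (1, 3 - t) else (4 - t, 0))"
proof (cases "t < 4")
  case True
  have "\<lfloor>t / 4\<rfloor> = 0" using True t d by (auto simp: floor_eq_iff)
  then show ?thesis using t d True unfolding gamma_def Let_def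
    by (auto simp: not_less)
next
  case False
  then have "t = 4" "d = 4" using t d by auto
  then show ?thesis unfolding gamma_def by simp
qed

definition zok :: "real set \<Rightarrow> bool" where
  "zok Z \<longleftrightarrow> finite Z \<and> 0 \<in> Z \<and> 1 \<in> Z \<and> Z \<subseteq> {0..1}"

lemma trace_PW:
  assumes V: "w \<in> trace_space (tensor_space (spline_space p Z1 m1) (spline_space p Z2 m2))"
    and Z1: "zok Z1" and Z2: "zok Z2" and d: "d \<in> {1..4::nat}"
  shows "PW (real d - 1) (real d - 1 + 1) (\<lambda>t. w (gamma t))"
proof -
  from V obtain v where v: "v \<in> tensor_space (spline_space p Z1 m1) (spline_space p Z2 m2)"
    and wv: "\<And>t. w (gamma t) = v (gamma t)" unfolding trace_space_def by blast
  from v obtain k :: nat and f g where fg: "\<And>i. i < k \<Longrightarrow> f i \<in> spline_space p Z1 m1 \<and> g i \<in> spline_space p Z2 m2"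
    and vfg: "\<And>x y. v (x, y) = (\<Sum>i<k. f i x * g i y)" unfolding tensor_space_def by blast
  have pf: "PW 0 1 (f i)" if "i < k" for i using spline_PW fg[OF that] Z1 unfolding zok_def by blast
  have pg: "PW 0 1 (g i)" if "i < k" for i using spline_PW fg[OF that] Z2 unfolding zok_def by blast
  have h1: "PW 0 1 (\<lambda>y. \<Sum>i<k. f i c * g i y)" for c by (intro PW_sum PW_cmul pg)
  have h2: "PW 0 1 (\<lambda>x. \<Sum>i<k. g i c * f i x)" for c by (intro PW_sum PW_cmul pf)
  have wg: "w (gamma t) = v (gamma t)" for t by (rule wv)
  consider "d = 1" | "d = 2" | "d = 3" | "d = 4" using d by fastforce
  then show ?thesis
  proof cases
    case 1
    have "PW 0 (0+1) (\<lambda>t. w (gamma t))"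
      by (rule PW_eq[OF PW_shift[OF h1, of 0 0]]) (subst wg, use 1 d gamma_side[of d] in \<open>auto simp: vfg\<close>)
    then show ?thesis using 1 by simp
  next
    case 2
    have "PW 1 (1+1) (\<lambda>t. w (gamma t))"
      by (rule PW_eq[OF PW_shift[OF h2, of 1 1]]) (subst wg, use 2 d gamma_side[of d] in \<open>auto simp: vfg mult.commute\<close>)
    then show ?thesis using 2 by simp
  next
    case 3
    have "PW 2 (2+1) (\<lambda>t. w (gamma t))"
      by (rule PW_eq[OF PW_refl[OF h1[of 1], of 2]]) (subst wg, use 3 d gamma_side[of d] in \<open>auto simp: vfg\<close>)
    then show ?thesis using 3 by simp
  next
    case 4
    have "PW 3 (3+1) (\<lambda>t. w (gamma t))"
      by (rule PW_eq[OF PW_refl[OF h2[of 0], of 3]]) (subst wg, use 4 d gamma_side[of d] in \<open>auto simp: vfg mult.commute\<close>)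
    then show ?thesis using 4 by simp
  qed
qed

lemma trace_bound:
  fixes g :: "real \<Rightarrow> real" and pr :: real
  assumes pw: "PW a (a+1) g" and h: "0 < h" "h \<le> H0" and pr: "1 \<le> pr"
  shows "(g a)^2 \<le> 2 * (1 + H0) * (h / pr * integral {a..a+1} (\<lambda>t. (deriv g t)^2) + pr / h * integral {a..a+1} (\<lambda>t. (g t)^2))"
proof -
  define L where "L = integral {a..a+1} (\<lambda>t. (g t)^2)"
  define H where "H = integral {a..a+1} (\<lambda>t. (deriv g t)^2)"
  have L0: "0 \<le> L" unfolding L_def
    using pw unfolding PW_def by (intro integral_nonneg integrable_continuous_interval continuous_intros) auto
  have H0': "0 \<le> H" unfolding H_def
    by (cases "(\<lambda>t. (deriv g t)^2) integrable_on {a..a+1}") (auto intro: integral_nonneg simp: not_integrable_integral)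
  have H00: "0 < H0" using h by simp
  show ?thesis
  proof (cases "h / pr \<le> 1")
    case True
    define e where "e = h / pr"
    have e: "0 < e" "e \<le> 1" using True h pr unfolding e_def by auto
    have 1: "e * (g a)^2 \<le> 2 * L + 2 * e^2 * H" using trace1[OF pw e] unfolding L_def H_def .
    have "(g a)^2 \<le> (2 * L + 2 * e^2 * H) / e" using 1 e by (simp add: field_simps)
    also have "\<dots> = 2 * (e * H + (1/e) * L)" using e by (simp add: field_simps power2_eq_square)
    also have "\<dots> \<le> 2 * (1 + H0) * (e * H + (1/e) * L)"
      using e L0 H0' H00 by (intro mult_right_mono) auto
    finally show ?thesis unfolding e_def L_def H_def using h pr by simp
  next
    case False
    have 1: "1 * (g a)^2 \<le> 2 * L + 2 * 1^2 * H" using trace1[OF pw, of 1] unfolding L_def H_def by simp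
    have hp: "1 \<le> h / pr" using False by simp
    have m1: "H \<le> h / pr * H" using hp H0' by (simp add: mult_right_mono[of 1 "h/pr" H, simplified])
    have m2: "L \<le> (1 + H0) * (pr / h) * L"
    proof -
      have "1 \<le> (1 + H0) * (pr / h)"
      proof -
        have "1 \<le> H0 / h" using h by simp
        also have "\<dots> \<le> ((1 + H0) * pr) / h"
        proof (rule divide_right_mono)
          have "H0 \<le> (1 + H0) * 1" by simp
          also have "\<dots> \<le> (1 + H0) * pr" using pr H00 by (intro mult_left_mono) auto
          finally show "H0 \<le> (1 + H0) * pr" .
        qed (use h in auto)
        also have "\<dots> = (1 + H0) * (pr / h)" by simp
        finally show ?thesis .
      qed
      from mult_right_mono[OF this L0] show ?thesis by (simp only: mult_1)
    qed
    have m3: "h / pr * H \<le> (1 + H0) * (h / pr * H)"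
    proof -
      have "0 \<le> h / pr * H" using H0' h pr by simp
      from mult_right_mono[OF _ this, of 1 "1 + H0"] H00 show ?thesis by simp
    qed
    have "(g a)^2 \<le> 2 * (1 + H0) * (h / pr * H + pr / h * L)"
    proof -
      have eq: "2 * (1 + H0) * (h / pr * H + pr / h * L) = 2 * ((1 + H0) * (h / pr * H)) + 2 * ((1 + H0) * (pr / h) * L)"
        by (simp add: ring_distribs mult_ac add_divide_distrib)
      show ?thesis unfolding eq using 1 m1 m2 m3 by simp
    qed
    then show ?thesis unfolding L_def H_def .
  qed
qed

lemma bp_first:
  assumes "breakpoints_ok D lo hi"
  shows "lo \<le> Min {e\<in>D. 0 < e}" "Min {e\<in>D. 0 < e} \<le> hi" "Min {e\<in>D. 0 < e} \<in> D" "0 < Min {e\<in>D. 0 < e}"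
    "Min {e\<in>D. 0 < e} \<le> 1"
proof -
  have D: "finite D" "0 \<in> D" "1 \<in> D" "D \<subseteq> {0..1}" and gap: "\<And>a b. consec D a b \<Longrightarrow> lo \<le> b - a \<and> b - a \<le> hi"
    using assms unfolding breakpoints_ok_def by auto
  have A: "finite {e\<in>D. 0 < e}" "{e\<in>D. 0 < e} \<noteq> {}" using D by auto
  define m where "m = Min {e\<in>D. 0 < e}"
  have m: "m \<in> D" "0 < m" using Min_in[OF A] unfolding m_def by auto
  have "consec D 0 m" unfolding consec_def
  proof (intro conjI ballI)
    fix z assume "z \<in> D" show "\<not> (0 < z \<and> z < m)"
      using Min_le[OF A(1)] \<open>z \<in> D\<close> unfolding m_def by force
  qed (use m D in auto)
  from gap[OF this] show "lo \<le> Min {e\<in>D. 0 < e}" "Min {e\<in>D. 0 < e} \<le> hi" unfolding m_def by auto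
  show "Min {e\<in>D. 0 < e} \<in> D" "0 < Min {e\<in>D. 0 < e}" using m unfolding m_def by auto
  show "Min {e\<in>D. 0 < e} \<le> 1" using m D unfolding m_def by auto
qed

lemma eta_props:
  fixes h :: real
  assumes bp: "breakpoints_ok D lo hi" and lo: "0 < lo"
  defines "et \<equiv> Max {e\<in>D. e \<le> max h (Min {e\<in>D. 0 < e})}"
  shows "lo \<le> et" "et \<le> max h hi" "et \<le> 1" "et = 1 \<or> h - hi < et"
proof -
  have D: "finite D" "0 \<in> D" "1 \<in> D" "D \<subseteq> {0..1}" and gap: "\<And>a b. consec D a b \<Longrightarrow> lo \<le> b - a \<and> b - a \<le> hi"
    using bp unfolding breakpoints_ok_def by auto
  define m where "m = Min {e\<in>D. 0 < e}"
  note mf = bp_first[OF bp, folded m_def]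
  define T where "T = max h m"
  have U: "finite {e\<in>D. e \<le> T}" "{e\<in>D. e \<le> T} \<noteq> {}" using D mf unfolding T_def by auto
  have et: "et \<in> D" "et \<le> T" using Max_in[OF U] unfolding et_def T_def m_def by auto
  have "m \<le> et" using Max_ge[OF U(1), of m] mf unfolding et_def T_def m_def by auto
  then show "lo \<le> et" using mf by simp
  show "et \<le> max h hi" using et mf unfolding T_def by auto
  show "et \<le> 1" using et D by auto
  show "et = 1 \<or> h - hi < et"
  proof (cases "et = 1")
    case False
    then have et1: "et < 1" using et D by force
    have V: "finite {z\<in>D. et < z}" "{z\<in>D. et < z} \<noteq> {}" using D et1 by auto
    define nx where "nx = Min {z\<in>D. et < z}"
    have nx: "nx \<in> D" "et < nx" using Min_in[OF V] unfolding nx_def by auto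
    have "consec D et nx" unfolding consec_def
    proof (intro conjI ballI)
      fix z assume "z \<in> D" show "\<not> (et < z \<and> z < nx)"
        using Min_le[OF V(1)] \<open>z \<in> D\<close> unfolding nx_def by force
    qed (use nx et in auto)
    from gap[OF this] have "nx - et \<le> hi" by simp
    moreover have "T < nx"
    proof (rule ccontr)
      assume "\<not> T < nx"
      then have "nx \<in> {e\<in>D. e \<le> T}" using nx by auto
      from Max_ge[OF U(1) this] have "nx \<le> et" unfolding et_def T_def m_def by simp
      with nx show False by simp
    qed
    ultimately show ?thesis unfolding T_def by auto
  qed simp
qed

lemma bp_refl:
  assumes "breakpoints_ok Z lo hi" shows "breakpoints_ok ((\<lambda>z. 1 - z) ` Z) lo hi"
proof -
  have Z: "finite Z" "0 \<in> Z" "1 \<in> Z" "Z \<subseteq> {0..1}" and gap: "\<And>a b. consec Z a b \<Longrightarrow> lo \<le> b - a \<and> b - a \<le> hi"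
    using assms unfolding breakpoints_ok_def by auto
  have "consec Z (1 - b) (1 - a)" if "consec ((\<lambda>z. 1 - z) ` Z) a b" for a b
  proof -
    from that have ab: "1 - a \<in> Z" "1 - b \<in> Z" "a < b"
      and nz: "\<And>z. z \<in> (\<lambda>z. 1 - z) ` Z \<Longrightarrow> \<not> (a < z \<and> z < b)"
      unfolding consec_def by (auto simp: image_iff)
    show ?thesis unfolding consec_def
    proof (intro conjI ballI)
      fix z assume z: "z \<in> Z"
      have "1 - z \<in> (\<lambda>z. 1 - z) ` Z" using z by auto
      from nz[OF this] show "\<not> (1 - b < z \<and> z < 1 - a)" by auto
    qed (use ab in auto)
  qed
  then have "lo \<le> b - a \<and> b - a \<le> hi" if "consec ((\<lambda>z. 1 - z) ` Z) a b" for a b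
    using gap that by fastforce
  moreover have "0 \<in> (\<lambda>z. 1 - z) ` Z" "1 \<in> (\<lambda>z. 1 - z) ` Z" using Z by (auto simp: image_iff intro: bexI[of _ 1] bexI[of _ 0])
  ultimately show ?thesis unfolding breakpoints_ok_def using Z by auto
qed

definition Qf :: "nat \<Rightarrow> real \<Rightarrow> real \<Rightarrow> real" where
  "Qf k c s = (if s < c then (1 - s/c)^k else 0)"

lemma Qf_int:
  assumes c: "0 < c"
  shows "Qf k c integrable_on {0..1}" "integral {0..1} (Qf k c) \<le> c / (k+1)"
proof -
  define c' where "c' = min 1 c"
  have c': "0 < c'" "c' \<le> 1" "c' \<le> c" using c unfolding c'_def by auto
  define A where "A s = - (c / (k+1)) * (1 - s/c)^(Suc k)" for s
  have dA: "(A has_real_derivative (1 - s/c)^k) (at s)" for s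
  proof -
    have d1: "((\<lambda>s. 1 - s/c) has_real_derivative (-(1/c))) (at s)"
      using c by (auto intro!: derivative_eq_intros)
    have "(A has_real_derivative (- (c / (k+1))) * ((1 + of_nat k) * ((-(1/c)) * (1 - s/c)^k))) (at s)"
      unfolding A_def by (rule DERIV_cmult[OF DERIV_power_Suc[OF d1]])
    moreover have "(- (c / (k+1))) * ((1 + of_nat k) * ((-(1/c)) * (1 - s/c)^k)) = (1 - s/c)^k"
    proof -
      have n: "(1 + real k) \<noteq> 0" by simp
      have "(- (c / (k+1))) * ((1 + of_nat k) * ((-(1/c)) * (1 - s/c)^k)) = c / (1 + real k) * ((1 + real k) * ((1/c) * (1 - s/c)^k))"
        by (simp add: add.commute)
      also have "\<dots> = c * ((1/c) * (1 - s/c)^k)" using n by simp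
      also have "\<dots> = (1 - s/c)^k" using c by simp
      finally show ?thesis .
    qed
    ultimately show ?thesis by simp
  qed
  have i1: "((\<lambda>s. (1 - s/c)^k) has_integral (A c' - A 0)) {0..c'}"
    by (rule fundamental_theorem_of_calculus) (use c' dA in \<open>auto intro: has_field_derivative_at_within simp: has_real_derivative_iff_has_vector_derivative[symmetric]\<close>)
  have i1': "(Qf k c has_integral (A c' - A 0)) {0..c'}"
    by (rule has_integral_spike_finite[OF _ _ i1, of "{c}"]) (auto simp: Qf_def c'_def)
  have i2: "(Qf k c has_integral 0) {c'..1}"
  proof (rule has_integral_spike_finite[where S="{c'}" and f="\<lambda>s. 0"])
    show "Qf k c x = 0" if "x \<in> {c'..1} - {c'}" for x
      using that c' unfolding Qf_def c'_def by auto
  qed auto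
  have all: "(Qf k c has_integral (A c' - A 0 + 0)) {0..1}"
    by (rule has_integral_combine[OF _ _ i1' i2]) (use c' in auto)
  then show "Qf k c integrable_on {0..1}" by blast
  have "integral {0..1} (Qf k c) = A c' - A 0" using all by (simp add: integral_unique)
  also have "\<dots> = c / (k+1) - (c / (k+1)) * (1 - c'/c)^(k+1)" unfolding A_def by simp
  also have "\<dots> \<le> c / (k+1)" using c c' by simp
  finally show "integral {0..1} (Qf k c) \<le> c / (k+1)" .
qed

definition rf :: "bool \<Rightarrow> real \<Rightarrow> real" where
  "rf b s = (if b then 1 - s else s)"

lemma integral_rf: "integral {0..1} (\<lambda>x. f (rf b x)) = integral {0..1} (f :: real \<Rightarrow> real)"
proof (cases b)
  case True
  have r: "integral {0..1} (\<lambda>x. f (1 - x)) = integral {-1..0} (\<lambda>y. f (y + 1))"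
    using Henstock_Kurzweil_Integration.integral_reflect_real[where f="\<lambda>y. f (y + 1)" and a="-1" and b=0]
    by (simp add: algebra_simps del: Henstock_Kurzweil_Integration.integral_reflect_real)
  have s: "integral {0-1..1-1} (\<lambda>y. f (y + 1)) = integral {0..1} f" by (rule integral_shift_real_ivl)
  from r s have "integral {0..1} (\<lambda>x. f (1 - x)) = integral {0..1} f" by simp
  then show ?thesis using True by (simp add: rf_def)
qed (simp add: rf_def)

lemma rf_range: "x \<in> {0..1} \<Longrightarrow> rf b x \<in> {0..1}" by (auto simp: rf_def)

definition Fk :: "nat \<Rightarrow> real \<Rightarrow> real \<Rightarrow> real" where
  "Fk p a s = (max 0 (1 - s/a))^p"

definition Fd :: "nat \<Rightarrow> real \<Rightarrow> real \<Rightarrow> real" where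
  "Fd p a s = (if s < a then - (real p / a) * (1 - s/a)^(p-1) else 0)"

definition Eb :: "nat \<Rightarrow> real \<Rightarrow> real \<Rightarrow> real" where
  "Eb p m s = (max 0 (1 - s/(2*m)))^(p-1) * max 0 (min 1 (2 - s/m))"

lemma dFk:
  assumes p: "1 \<le> p" and a: "0 < a" and s: "s \<noteq> a"
  shows "(Fk p a has_real_derivative Fd p a s) (at s)"
proof (cases "s < a")
  case True
  have d: "((\<lambda>s. (1 - s/a)^p) has_real_derivative Fd p a s) (at s)"
  proof -
    have d1: "((\<lambda>s. 1 - s/a) has_real_derivative (-(1/a))) (at s)"
      using a by (auto intro!: derivative_eq_intros)
    have "((\<lambda>s. (1 - s/a)^p) has_real_derivative of_nat p * (-(1/a) * (1 - s/a)^(p - Suc 0))) (at s)"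
      by (rule DERIV_power[OF d1])
    moreover have "of_nat p * (-(1/a) * (1 - s/a)^(p - Suc 0)) = Fd p a s"
      unfolding Fd_def using True by simp
    ultimately show ?thesis by simp
  qed
  show ?thesis
  proof (rule has_field_derivative_transform_within_open[OF d, of "{..<a}"])
    show "(1 - x/a)^p = Fk p a x" if "x \<in> {..<a}" for x
    proof -
      have "max 0 (1 - x/a) = 1 - x/a" using that a by (auto simp: field_simps)
      then show ?thesis unfolding Fk_def by simp
    qed
  qed (use True in auto)
next
  case False
  with s have sa: "a < s" by simp
  have d: "((\<lambda>s. 0) has_real_derivative Fd p a s) (at s)" unfolding Fd_def using sa by simp
  show ?thesis
  proof (rule has_field_derivative_transform_within_open[OF d, of "{a<..}"])
    show "0 = Fk p a x" if "x \<in> {a<..}" for x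
    proof -
      have "max 0 (1 - x/a) = 0" using that a by (auto simp: field_simps)
      then show ?thesis using p unfolding Fk_def by (simp add: power_0_left)
    qed
  qed (use sa in auto)
qed

lemma dFkr:
  assumes p: "1 \<le> p" and a: "0 < a" and s: "rf b t \<noteq> a"
  shows "((\<lambda>t. Fk p a (rf b t)) has_real_derivative ((if b then -1 else 1) * Fd p a (rf b t))) (at t)"
proof -
  have dr: "(rf b has_real_derivative (if b then -1 else 1)) (at t)"
    by (cases b) (auto simp: rf_def[abs_def] intro!: derivative_eq_intros)
  have "((\<lambda>t. Fk p a (rf b t)) has_real_derivative Fd p a (rf b t) * (if b then -1 else 1)) (at t)"
    by (rule DERIV_chain2[OF dFk[OF p a s] dr])
  then show ?thesis by (simp add: mult.commute)
qed

lemma Fk_nonneg: "0 \<le> Fk p a s" unfolding Fk_def by simp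

lemma Fk_le1: assumes "0 < a" "0 \<le> s" shows "Fk p a s \<le> 1"
  unfolding Fk_def using assms by (intro power_le_one) auto

lemma Fk_prod:
  assumes a: "0 < a1" "0 < a2" and s: "0 \<le> s"
  shows "Fk p a1 s * Fk p a2 s \<le> Fk p (min a1 a2) s"
proof (cases "a1 \<le> a2")
  case True
  then have "Fk p a1 s * Fk p a2 s \<le> Fk p a1 s * 1"
    using Fk_le1[OF a(2) s] Fk_nonneg by (intro mult_left_mono) auto
  then show ?thesis using True by simp
next
  case False
  then have "Fk p a1 s * Fk p a2 s \<le> 1 * Fk p a2 s"
    using Fk_le1[OF a(1) s] Fk_nonneg by (intro mult_right_mono) auto
  then show ?thesis using False by simp
qed

lemma Eb_nonneg: "0 \<le> Eb p m s" unfolding Eb_def by simp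

lemma Fd_prod:
  assumes a: "0 < a1" "0 < a2" and s: "0 \<le> s"
  shows "\<bar>Fd p a1 s * Fd p a2 s\<bar> \<le> (real p^2 / (a1 * a2)) * Eb p (min a1 a2) s"
proof (cases "s < min a1 a2")
  case False
  then have "Fd p a1 s = 0 \<or> Fd p a2 s = 0" unfolding Fd_def by auto
  then show ?thesis using Eb_nonneg[of p "min a1 a2" s] a by auto
next
  case True
  define m where "m = min a1 a2"
  have m: "0 < m" "s < m" "m \<le> a1" "m \<le> a2" using True a unfolding m_def by auto
  have x1: "0 \<le> 1 - s/a1" "1 - s/a1 \<le> 1" using m s a by (auto simp: field_simps)
  have x2: "0 \<le> 1 - s/a2" "1 - s/a2 \<le> 1" using m s a by (auto simp: field_simps)
  have "(1 - s/a1) * (1 - s/a2) \<le> 1 - s/(2*m)"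
  proof (cases "a1 \<le> a2")
    case True
    have "(1 - s/a1) * (1 - s/a2) \<le> (1 - s/a1) * 1" using x1 x2 by (intro mult_left_mono) auto
    also have "\<dots> \<le> 1 - s/(2*m)" using True m s a unfolding m_def by (auto simp: field_simps)
    finally show ?thesis .
  next
    case False
    have "(1 - s/a1) * (1 - s/a2) \<le> 1 * (1 - s/a2)" using x1 x2 by (intro mult_right_mono) auto
    also have "\<dots> \<le> 1 - s/(2*m)" using False m s a unfolding m_def by (auto simp: field_simps)
    finally show ?thesis .
  qed
  then have pw: "((1 - s/a1) * (1 - s/a2))^(p-1) \<le> (max 0 (1 - s/(2*m)))^(p-1)"
    using x1 x2 by (intro power_mono) auto
  have cut: "max 0 (min 1 (2 - s/m)) = 1" using m by (auto simp: field_simps)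
  have "\<bar>Fd p a1 s * Fd p a2 s\<bar> = (real p^2 / (a1 * a2)) * ((1 - s/a1) * (1 - s/a2))^(p-1)"
    using m a x1 x2 unfolding Fd_def by (simp add: abs_mult power_mult_distrib power2_eq_square)
  also have "\<dots> \<le> (real p^2 / (a1 * a2)) * Eb p m s"
    unfolding Eb_def cut using pw a by (intro mult_left_mono) auto
  finally show ?thesis unfolding m_def .
qed

lemma Eb_Q: assumes "0 < m" shows "Eb p m s \<le> Qf (p-1) (2*m) s"
proof (cases "s < 2*m")
  case True
  have "Eb p m s \<le> (max 0 (1 - s/(2*m)))^(p-1) * 1" unfolding Eb_def by (intro mult_left_mono) auto
  also have "max 0 (1 - s/(2*m)) = 1 - s/(2*m)" using True assms by (auto simp: field_simps)
  finally show ?thesis unfolding Qf_def using True by simp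
next
  case False
  then have "max 0 (min 1 (2 - s/m)) = 0" using assms by (auto simp: field_simps)
  then show ?thesis unfolding Eb_def Qf_def using False by simp
qed

lemma Fk_Q: assumes "1 \<le> p" "0 < m" shows "Fk p m s \<le> Qf p m s"
proof (cases "s < m")
  case True
  then have "max 0 (1 - s/m) = 1 - s/m" using assms by (auto simp: field_simps)
  then show ?thesis unfolding Fk_def Qf_def using True by simp
next
  case False
  then have "max 0 (1 - s/m) = 0" using assms by (auto simp: field_simps)
  then show ?thesis unfolding Fk_def Qf_def using False assms by (auto simp: power_0_left)
qed


lemma negl_rf_fst: "negligible {z::real\<times>real. rf b (fst z) = a}"
proof -
  have e: "{z::real\<times>real. rf b (fst z) = a} = {z. z \<bullet> (1,0) = (if b then 1 - a else a)}"
    by (auto simp: rf_def)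
  have "(1::real,0::real) \<in> Basis" by (simp add: Basis_prod_def)
  from negligible_standard_hyperplane[OF this] show ?thesis unfolding e .
qed

lemma negl_rf_snd: "negligible {z::real\<times>real. rf b (snd z) = a}"
proof -
  have e: "{z::real\<times>real. rf b (snd z) = a} = {z. z \<bullet> (0,1) = (if b then 1 - a else a)}"
    by (auto simp: rf_def)
  have "(0::real,1::real) \<in> Basis" by (simp add: Basis_prod_def)
  from negligible_standard_hyperplane[OF this] show ?thesis unfolding e .
qed

lemma sep_int:
  fixes \<alpha> \<beta> \<gamma> \<delta> :: "real \<Rightarrow> real"
  assumes c: "continuous_on {0..1} \<alpha>" "continuous_on {0..1} \<beta>" "continuous_on {0..1} \<gamma>" "continuous_on {0..1} \<delta>"
  shows "integral (cbox (0,0) (1,1)) (\<lambda>z. \<alpha> (fst z) * \<beta> (snd z) + \<gamma> (fst z) * \<delta> (snd z))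
       = integral {0..1} \<alpha> * integral {0..1} \<beta> + integral {0..1} \<gamma> * integral {0..1} \<delta>"
proof -
  have cc: "continuous_on (cbox (0,0) (1,1)) (\<lambda>z. \<alpha> (fst z) * \<beta> (snd z) + \<gamma> (fst z) * \<delta> (snd z))"
  proof -
    have fs: "fst ` cbox (0::real,0::real) (1,1) \<subseteq> {0..1}" "snd ` cbox (0::real,0::real) (1,1) \<subseteq> {0..1}"
      by (auto simp: cbox_Pair_eq)
    note c1 = continuous_on_compose2[OF c(1) continuous_on_fst[OF continuous_on_id] fs(1)]
    note c2 = continuous_on_compose2[OF c(2) continuous_on_snd[OF continuous_on_id] fs(2)]
    note c3 = continuous_on_compose2[OF c(3) continuous_on_fst[OF continuous_on_id] fs(1)]
    note c4 = continuous_on_compose2[OF c(4) continuous_on_snd[OF continuous_on_id] fs(2)]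
    show ?thesis by (intro continuous_on_add continuous_on_mult c1 c2 c3 c4)
  qed
  have ii: "\<And>f. continuous_on {0..1} f \<Longrightarrow> (f::real\<Rightarrow>real) integrable_on {0..1}"
    by (rule integrable_continuous_interval)
  have "integral (cbox (0,0) (1,1)) (\<lambda>z. \<alpha> (fst z) * \<beta> (snd z) + \<gamma> (fst z) * \<delta> (snd z))
      = integral (cbox 0 1) (\<lambda>x. integral (cbox 0 1) (\<lambda>y. \<alpha> x * \<beta> y + \<gamma> x * \<delta> y))"
    using integral_prod_continuous[OF cc] by simp
  also have "\<dots> = integral {0..1} (\<lambda>x. \<alpha> x * integral {0..1} \<beta> + \<gamma> x * integral {0..1} \<delta>)"
  proof -
    have "integral {0..1} (\<lambda>y. \<alpha> x * \<beta> y + \<gamma> x * \<delta> y) = \<alpha> x * integral {0..1} \<beta> + \<gamma> x * integral {0..1} \<delta>" for x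
      using ii[OF c(2)] ii[OF c(4)]
      by (subst integral_add) (auto intro: integrable_on_mult_right)
    then show ?thesis by simp
  qed
  also have "\<dots> = integral {0..1} \<alpha> * integral {0..1} \<beta> + integral {0..1} \<gamma> * integral {0..1} \<delta>"
    using ii[OF c(1)] ii[OF c(3)]
    by (subst integral_add) (auto intro: integrable_on_mult_left)
  finally show ?thesis .
qed


lemma cont_rf: "continuous_on S (rf b)"
  by (cases b) (auto simp: rf_def[abs_def] intro!: continuous_intros)

lemma cont_Eb: "0 < m \<Longrightarrow> continuous_on S (Eb p m)"
  unfolding Eb_def[abs_def] by (intro continuous_intros) auto

lemma cont_Fk: "0 < m \<Longrightarrow> continuous_on S (Fk p m)"
  unfolding Fk_def[abs_def] by (intro continuous_intros) auto

lemma cont_comp_rf: "continuous_on UNIV f \<Longrightarrow> continuous_on S (\<lambda>x. f (rf b x))"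
  by (rule continuous_on_compose2[OF _ cont_rf]) auto

lemma int_Eb:
  assumes m: "0 < m" and p: "1 \<le> p"
  shows "0 \<le> integral {0..1} (\<lambda>x. Eb p m (rf b x))" "integral {0..1} (\<lambda>x. Eb p m (rf b x)) \<le> 2 * m / real p"
proof -
  have e: "integral {0..1} (\<lambda>x. Eb p m (rf b x)) = integral {0..1} (Eb p m)" by (rule integral_rf)
  have ie: "Eb p m integrable_on {0..1}" using cont_Eb[OF m] by (rule integrable_continuous_interval)
  show "0 \<le> integral {0..1} (\<lambda>x. Eb p m (rf b x))" unfolding e using ie
    by (rule integral_nonneg) (simp add: Eb_nonneg)
  have "integral {0..1} (Eb p m) \<le> integral {0..1} (Qf (p-1) (2*m))"
    by (rule integral_le[OF ie Qf_int(1)]) (use m Eb_Q in auto)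
  also have "\<dots> \<le> 2 * m / (real (p-1) + 1)" using Qf_int(2)[of "2*m" "p-1"] m by (simp add: add.commute)
  also have "real (p-1) + 1 = real p" using p by (simp add: of_nat_diff)
  finally show "integral {0..1} (\<lambda>x. Eb p m (rf b x)) \<le> 2 * m / real p" unfolding e .
qed

lemma int_Fk:
  assumes m: "0 < m" and p: "1 \<le> p"
  shows "0 \<le> integral {0..1} (\<lambda>x. Fk p m (rf b x))" "integral {0..1} (\<lambda>x. Fk p m (rf b x)) \<le> m / (real p + 1)"
proof -
  have e: "integral {0..1} (\<lambda>x. Fk p m (rf b x)) = integral {0..1} (Fk p m)" by (rule integral_rf)
  have ie: "Fk p m integrable_on {0..1}" using cont_Fk[OF m] by (rule integrable_continuous_interval)
  show "0 \<le> integral {0..1} (\<lambda>x. Fk p m (rf b x))" unfolding e using ie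
    by (rule integral_nonneg) (simp add: Fk_nonneg)
  have "integral {0..1} (Fk p m) \<le> integral {0..1} (Qf p m)"
    by (rule integral_le[OF ie Qf_int(1)]) (use m p Fk_Q in auto)
  also have "\<dots> \<le> m / (real p + 1)" using Qf_int(2)[of m p] m by (simp add: add.commute)
  finally show "integral {0..1} (\<lambda>x. Fk p m (rf b x)) \<le> m / (real p + 1)" unfolding e .
qed

lemma sep_integrable:
  fixes \<alpha> \<beta> \<gamma> \<delta> :: "real \<Rightarrow> real"
  assumes c: "continuous_on {0..1} \<alpha>" "continuous_on {0..1} \<beta>" "continuous_on {0..1} \<gamma>" "continuous_on {0..1} \<delta>"
  shows "(\<lambda>z. \<alpha> (fst z) * \<beta> (snd z) + \<gamma> (fst z) * \<delta> (snd z)) integrable_on cbox (0,0) (1,1)"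
proof -
  have cc: "continuous_on (cbox (0,0) (1,1)) (\<lambda>z. \<alpha> (fst z) * \<beta> (snd z) + \<gamma> (fst z) * \<delta> (snd z))"
  proof -
    have fs: "fst ` cbox (0::real,0::real) (1,1) \<subseteq> {0..1}" "snd ` cbox (0::real,0::real) (1,1) \<subseteq> {0..1}"
      by (auto simp: cbox_Pair_eq)
    note c1 = continuous_on_compose2[OF c(1) continuous_on_fst[OF continuous_on_id] fs(1)]
    note c2 = continuous_on_compose2[OF c(2) continuous_on_snd[OF continuous_on_id] fs(2)]
    note c3 = continuous_on_compose2[OF c(3) continuous_on_fst[OF continuous_on_id] fs(1)]
    note c4 = continuous_on_compose2[OF c(4) continuous_on_snd[OF continuous_on_id] fs(2)]
    show ?thesis by (intro continuous_on_add continuous_on_mult c1 c2 c3 c4)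
  qed
  then show ?thesis by (rule integrable_continuous)
qed

lemma arith1:
  fixes a1 a2 mb pr :: real
  assumes "0 < a1" "0 < a2" "0 < mb" "1 \<le> pr"
  shows "pr^2 / (a1 * a2) * (2 * min a1 a2 / pr) * (mb / (pr + 1)) \<le> 2 * (mb / max a1 a2)"
proof -
  define m where "m = min a1 a2"
  define M where "M = max a1 a2"
  have mM: "0 < m" "0 < M" using assms unfolding m_def M_def by auto
  have mm: "a1 * a2 = m * M" unfolding m_def M_def by (simp add: min_def max_def mult.commute)
  have "pr^2 / (a1 * a2) * (2 * min a1 a2 / pr) = 2 * pr / M"
    unfolding mm m_def[symmetric] using mM assms by (simp add: field_simps power2_eq_square)
  then have "pr^2 / (a1 * a2) * (2 * min a1 a2 / pr) * (mb / (pr + 1)) = (2 * pr / M) * (mb / (pr + 1))" by simp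
  also have "\<dots> = (pr / (pr + 1)) * (2 * (mb / max a1 a2))"
    unfolding M_def[symmetric] using mM assms by (simp add: field_simps)
  finally have "pr^2 / (a1 * a2) * (2 * min a1 a2 / pr) * (mb / (pr + 1)) = (pr / (pr + 1)) * (2 * (mb / max a1 a2))" .
  also have "\<dots> \<le> 1 * (2 * (mb / max a1 a2))" using assms by (intro mult_right_mono) auto
  finally show ?thesis by simp
qed

lemma core2D:
  fixes K1 K2 a1 a2 b1 b2 :: real and cx cy :: bool
  assumes p: "1 \<le> p" and pos: "0 < a1" "0 < a2" "0 < b1" "0 < b2"
  shows "\<bar>h1_inner (\<lambda>z. K1 * Fk p a1 (rf cx (fst z)) * Fk p b1 (rf cy (snd z)))
                    (\<lambda>z. K2 * Fk p a2 (rf cx (fst z)) * Fk p b2 (rf cy (snd z)))\<bar>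
         \<le> \<bar>K1 * K2\<bar> * (2 * (min b1 b2 / max a1 a2) + 2 * (min a1 a2 / max b1 b2))"
proof -
  define u where "u = (\<lambda>z. K1 * Fk p a1 (rf cx (fst z)) * Fk p b1 (rf cy (snd z)))"
  define v where "v = (\<lambda>z. K2 * Fk p a2 (rf cx (fst z)) * Fk p b2 (rf cy (snd z)))"
  define f where "f z = pdx u z * pdx v z + pdy u z * pdy v z" for z
  define N where "N = {z::real\<times>real. rf cx (fst z) = a1} \<union> {z. rf cx (fst z) = a2} \<union> {z. rf cy (snd z) = b1} \<union> {z. rf cy (snd z) = b2}"
  have negN: "negligible N" unfolding N_def by (intro negligible_Un negl_rf_fst negl_rf_snd)
  define ma where "ma = min a1 a2"
  define mb where "mb = min b1 b2"
  have mpos: "0 < ma" "0 < mb" using pos unfolding ma_def mb_def by auto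
  define K where "K = \<bar>K1 * K2\<bar>"
  define \<alpha> where "\<alpha> x = K * (real p^2 / (a1 * a2)) * Eb p ma (rf cx x)" for x
  define \<beta> where "\<beta> y = Fk p mb (rf cy y)" for y
  define \<gamma> where "\<gamma> x = K * Fk p ma (rf cx x)" for x
  define \<delta> where "\<delta> y = (real p^2 / (b1 * b2)) * Eb p mb (rf cy y)" for y
  define g where "g z = \<alpha> (fst z) * \<beta> (snd z) + \<gamma> (fst z) * \<delta> (snd z)" for z
  have sgn: "(if b then -1 else 1) * (if b then -1 else (1::real)) = 1" for b by simp
  have bound: "\<bar>f z\<bar> \<le> g z" if z: "z \<in> cbox (0,0) (1,1) - N" for z
  proof -
    obtain x y where xy: "z = (x, y)" by (cases z)
    have x01: "rf cx x \<in> {0..1}" and y01: "rf cy y \<in> {0..1}"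
      using z rf_range unfolding xy by (auto simp: cbox_Pair_eq)
    have nx: "rf cx x \<noteq> a1" "rf cx x \<noteq> a2" and ny: "rf cy y \<noteq> b1" "rf cy y \<noteq> b2"
      using z unfolding xy N_def by auto
    define sx where "sx = (if cx then -1 else (1::real))"
    define sy where "sy = (if cy then -1 else (1::real))"
    have "((\<lambda>t. K1 * Fk p a1 (rf cx t) * Fk p b1 (rf cy y)) has_real_derivative K1 * (sx * Fd p a1 (rf cx x)) * Fk p b1 (rf cy y)) (at x)"
      unfolding sx_def by (intro DERIV_cmult_right DERIV_cmult dFkr[OF p pos(1) nx(1)])
    then have pdxu: "pdx u z = K1 * (sx * Fd p a1 (rf cx x)) * Fk p b1 (rf cy y)"
      unfolding pdx_def xy u_def by (simp add: DERIV_imp_deriv)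
    have "((\<lambda>t. K2 * Fk p a2 (rf cx t) * Fk p b2 (rf cy y)) has_real_derivative K2 * (sx * Fd p a2 (rf cx x)) * Fk p b2 (rf cy y)) (at x)"
      unfolding sx_def by (intro DERIV_cmult_right DERIV_cmult dFkr[OF p pos(2) nx(2)])
    then have pdxv: "pdx v z = K2 * (sx * Fd p a2 (rf cx x)) * Fk p b2 (rf cy y)"
      unfolding pdx_def xy v_def by (simp add: DERIV_imp_deriv)
    have "((\<lambda>t. K1 * Fk p a1 (rf cx x) * Fk p b1 (rf cy t)) has_real_derivative K1 * Fk p a1 (rf cx x) * (sy * Fd p b1 (rf cy y))) (at y)"
      unfolding sy_def by (intro DERIV_cmult dFkr[OF p pos(3) ny(1)])
    then have pdyu: "pdy u z = K1 * Fk p a1 (rf cx x) * (sy * Fd p b1 (rf cy y))"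
      unfolding pdy_def xy u_def by (simp add: DERIV_imp_deriv)
    have "((\<lambda>t. K2 * Fk p a2 (rf cx x) * Fk p b2 (rf cy t)) has_real_derivative K2 * Fk p a2 (rf cx x) * (sy * Fd p b2 (rf cy y))) (at y)"
      unfolding sy_def by (intro DERIV_cmult dFkr[OF p pos(4) ny(2)])
    then have pdyv: "pdy v z = K2 * Fk p a2 (rf cx x) * (sy * Fd p b2 (rf cy y))"
      unfolding pdy_def xy v_def by (simp add: DERIV_imp_deriv)
    have sx2: "sx * sx = 1" "sy * sy = 1" unfolding sx_def sy_def by auto
    have t1: "\<bar>pdx u z * pdx v z\<bar> \<le> \<alpha> x * \<beta> y"
    proof -
      have "pdx u z * pdx v z = (K1 * K2) * (sx * sx) * (Fd p a1 (rf cx x) * Fd p a2 (rf cx x)) * (Fk p b1 (rf cy y) * Fk p b2 (rf cy y))"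
        unfolding pdxu pdxv by (simp only: mult_ac)
      then have "\<bar>pdx u z * pdx v z\<bar> = K * \<bar>Fd p a1 (rf cx x) * Fd p a2 (rf cx x)\<bar> * (Fk p b1 (rf cy y) * Fk p b2 (rf cy y))"
        unfolding K_def using sx2 by (simp add: abs_mult Fk_nonneg)
      also have "\<dots> \<le> K * ((real p^2 / (a1 * a2)) * Eb p ma (rf cx x)) * Fk p mb (rf cy y)"
        unfolding ma_def mb_def K_def
        by (intro mult_mono Fd_prod Fk_prod mult_nonneg_nonneg) (use x01 y01 pos in \<open>auto simp: Fk_nonneg Eb_nonneg\<close>)
      finally show ?thesis unfolding \<alpha>_def \<beta>_def by (simp add: mult.assoc)
    qed
    have t2: "\<bar>pdy u z * pdy v z\<bar> \<le> \<gamma> x * \<delta> y"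
    proof -
      have "pdy u z * pdy v z = (K1 * K2) * (sy * sy) * (Fk p a1 (rf cx x) * Fk p a2 (rf cx x)) * (Fd p b1 (rf cy y) * Fd p b2 (rf cy y))"
        unfolding pdyu pdyv by (simp only: mult_ac)
      then have "\<bar>pdy u z * pdy v z\<bar> = K * (Fk p a1 (rf cx x) * Fk p a2 (rf cx x)) * \<bar>Fd p b1 (rf cy y) * Fd p b2 (rf cy y)\<bar>"
        unfolding K_def using sx2 by (simp add: abs_mult Fk_nonneg)
      also have "\<dots> \<le> K * Fk p ma (rf cx x) * ((real p^2 / (b1 * b2)) * Eb p mb (rf cy y))"
        unfolding ma_def mb_def K_def
        by (intro mult_mono Fd_prod Fk_prod mult_nonneg_nonneg) (use x01 y01 pos in \<open>auto simp: Fk_nonneg Eb_nonneg\<close>)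
      finally show ?thesis unfolding \<gamma>_def \<delta>_def by (simp add: mult.assoc)
    qed
    have "\<bar>f z\<bar> \<le> \<bar>pdx u z * pdx v z\<bar> + \<bar>pdy u z * pdy v z\<bar>" unfolding f_def by (rule abs_triangle_ineq)
    also have "\<dots> \<le> g z"
    proof -
      have "g z = \<alpha> x * \<beta> y + \<gamma> x * \<delta> y" unfolding g_def xy by simp
      then show ?thesis using t1 t2 by linarith
    qed
    finally show ?thesis .
  qed
  have c\<alpha>: "continuous_on {0..1} \<alpha>" unfolding \<alpha>_def
    by (intro continuous_on_mult continuous_on_const cont_comp_rf cont_Eb mpos)
  have c\<beta>: "continuous_on {0..1} \<beta>" unfolding \<beta>_def by (intro cont_comp_rf cont_Fk mpos)
  have c\<gamma>: "continuous_on {0..1} \<gamma>" unfolding \<gamma>_def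
    by (intro continuous_on_mult continuous_on_const cont_comp_rf cont_Fk mpos)
  have c\<delta>: "continuous_on {0..1} \<delta>" unfolding \<delta>_def
    by (intro continuous_on_mult continuous_on_const cont_comp_rf cont_Eb mpos)
  have gint: "integral (cbox (0,0) (1,1)) g = integral {0..1} \<alpha> * integral {0..1} \<beta> + integral {0..1} \<gamma> * integral {0..1} \<delta>"
    unfolding g_def[abs_def] by (rule sep_int[OF c\<alpha> c\<beta> c\<gamma> c\<delta>])
  have gi: "g integrable_on cbox (0,0) (1,1)"
    unfolding g_def[abs_def] by (rule sep_integrable[OF c\<alpha> c\<beta> c\<gamma> c\<delta>])
  have K0: "0 \<le> K" unfolding K_def by simp
  have gnn: "0 \<le> g z" for z
    unfolding g_def \<alpha>_def \<beta>_def \<gamma>_def \<delta>_def using K0 pos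
    by (intro add_nonneg_nonneg mult_nonneg_nonneg) (auto simp: Eb_nonneg Fk_nonneg)
  have pr: "1 \<le> real p" using p by simp
  have Ia: "0 \<le> integral {0..1} \<alpha>" "integral {0..1} \<alpha> \<le> K * (real p^2 / (a1 * a2)) * (2 * ma / real p)"
  proof -
    have e: "integral {0..1} \<alpha> = (K * (real p^2 / (a1 * a2))) * integral {0..1} (\<lambda>x. Eb p ma (rf cx x))"
      unfolding \<alpha>_def by simp
    have c0: "0 \<le> K * (real p^2 / (a1 * a2))" using K0 pos by simp
    show "0 \<le> integral {0..1} \<alpha>" unfolding e using int_Eb[OF mpos(1) p, of cx] by (intro mult_nonneg_nonneg[OF c0]) auto
    show "integral {0..1} \<alpha> \<le> K * (real p^2 / (a1 * a2)) * (2 * ma / real p)"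
      unfolding e using int_Eb[OF mpos(1) p, of cx] c0 by (intro mult_left_mono) auto
  qed
  have Ib: "0 \<le> integral {0..1} \<beta>" "integral {0..1} \<beta> \<le> mb / (real p + 1)"
    unfolding \<beta>_def using int_Fk[OF mpos(2) p, of cy] by auto
  have Ic: "0 \<le> integral {0..1} \<gamma>" "integral {0..1} \<gamma> \<le> K * (ma / (real p + 1))"
  proof -
    have e: "integral {0..1} \<gamma> = K * integral {0..1} (\<lambda>x. Fk p ma (rf cx x))"
      unfolding \<gamma>_def by simp
    show "0 \<le> integral {0..1} \<gamma>" unfolding e using int_Fk[OF mpos(1) p, of cx] K0 by (intro mult_nonneg_nonneg) auto
    show "integral {0..1} \<gamma> \<le> K * (ma / (real p + 1))"
      unfolding e using int_Fk[OF mpos(1) p, of cx] K0 by (intro mult_left_mono) auto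
  qed
  have Id: "0 \<le> integral {0..1} \<delta>" "integral {0..1} \<delta> \<le> (real p^2 / (b1 * b2)) * (2 * mb / real p)"
  proof -
    have e: "integral {0..1} \<delta> = (real p^2 / (b1 * b2)) * integral {0..1} (\<lambda>x. Eb p mb (rf cy x))"
      unfolding \<delta>_def by simp
    have c0: "0 \<le> real p^2 / (b1 * b2)" using pos by simp
    show "0 \<le> integral {0..1} \<delta>" unfolding e using int_Eb[OF mpos(2) p, of cy] by (intro mult_nonneg_nonneg[OF c0]) auto
    show "integral {0..1} \<delta> \<le> (real p^2 / (b1 * b2)) * (2 * mb / real p)"
      unfolding e using int_Eb[OF mpos(2) p, of cy] c0 by (intro mult_left_mono) auto
  qed
  have "integral {0..1} \<alpha> * integral {0..1} \<beta> \<le> (K * (real p^2 / (a1 * a2)) * (2 * ma / real p)) * (mb / (real p + 1))"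
    using Ia Ib by (intro mult_mono) auto
  also have "\<dots> = K * (real p^2 / (a1 * a2) * (2 * min a1 a2 / real p) * (mb / (real p + 1)))"
    unfolding ma_def by (simp add: mult.assoc)
  also have "\<dots> \<le> K * (2 * (min b1 b2 / max a1 a2))"
    unfolding mb_def using arith1[OF pos(1,2) _ pr, of "min b1 b2"] pos K0 by (intro mult_left_mono) auto
  finally have P1: "integral {0..1} \<alpha> * integral {0..1} \<beta> \<le> K * (2 * (min b1 b2 / max a1 a2))" .
  have "integral {0..1} \<gamma> * integral {0..1} \<delta> \<le> (K * (ma / (real p + 1))) * ((real p^2 / (b1 * b2)) * (2 * mb / real p))"
    using Ic Id by (intro mult_mono) auto
  also have "\<dots> = K * (real p^2 / (b1 * b2) * (2 * min b1 b2 / real p) * (min a1 a2 / (real p + 1)))"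
    unfolding ma_def mb_def by (simp add: mult_ac)
  also have "\<dots> \<le> K * (2 * (min a1 a2 / max b1 b2))"
    using arith1[OF pos(3,4) _ pr, of "min a1 a2"] pos K0 by (intro mult_left_mono) auto
  finally have P2: "integral {0..1} \<gamma> * integral {0..1} \<delta> \<le> K * (2 * (min a1 a2 / max b1 b2))" .
  have hi: "h1_inner u v = integral (cbox (0,0) (1,1)) f" unfolding h1_inner_def f_def ..
  have main: "\<bar>integral (cbox (0,0) (1,1)) f\<bar> \<le> integral (cbox (0,0) (1,1)) g"
  proof (cases "f integrable_on cbox (0,0) (1,1)")
    case False
    then show ?thesis using gi gnn by (simp add: not_integrable_integral integral_nonneg)
  next
    case True
    define f' where "f' z = (if z \<in> N then 0 else f z)" for z
    have f'i: "f' integrable_on cbox (0,0) (1,1)"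
      by (rule integrable_spike[OF True negN]) (auto simp: f'_def)
    have "integral (cbox (0,0) (1,1)) f = integral (cbox (0,0) (1,1)) f'"
      by (rule integral_spike[OF negN]) (auto simp: f'_def)
    also have "\<bar>\<dots>\<bar> \<le> integral (cbox (0,0) (1,1)) g"
    proof -
      have "norm (integral (cbox (0,0) (1,1)) f') \<le> integral (cbox (0,0) (1,1)) g"
      proof (rule integral_norm_bound_integral[OF f'i gi])
        fix z assume "z \<in> cbox (0::real, 0::real) (1, 1)"
        then show "norm (f' z) \<le> g z" using bound[of z] gnn[of z] by (auto simp: f'_def)
      qed
      then show ?thesis by simp
    qed
    finally show ?thesis .
  qed
  have "\<bar>h1_inner u v\<bar> \<le> K * (2 * (min b1 b2 / max a1 a2)) + K * (2 * (min a1 a2 / max b1 b2))"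
    using main P1 P2 unfolding hi gint by linarith
  then show ?thesis unfolding u_def v_def K_def by (simp add: distrib_left)
qed

lemma trans_bp:
  assumes "e \<in> {1..4::nat}" "breakpoints_ok (Zf 1) lo hi" "breakpoints_ok (Zf 2) lo hi"
  shows "breakpoints_ok (trans_dists Zf e) lo hi"
  using assms bp_refl unfolding trans_dists_def by auto

lemma eta_bound:
  fixes C3 c0 hh h :: real
  assumes bp: "breakpoints_ok (trans_dists Zf e) (C3 * hh) hh" and pos: "0 < C3" "0 < c0" "0 < hh"
    and h: "hh / 4 \<le> h" and big: "2 * hh < h \<Longrightarrow> c0 * h \<le> 1"
  shows "min (C3/2) (min c0 (1/2)) * h \<le> eta Zf e h" "eta Zf e h \<le> 4 * h"
proof -
  note ep = eta_props[OF bp, of h]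
  have et: "eta Zf e h = Max {x \<in> trans_dists Zf e. x \<le> max h (Min {x \<in> trans_dists Zf e. 0 < x})}"
    unfolding eta_def Let_def ..
  have l1: "C3 * hh \<le> eta Zf e h" using ep(1) pos unfolding et by simp
  have u1: "eta Zf e h \<le> max h hh" using ep(2) pos unfolding et by simp
  have d1: "eta Zf e h = 1 \<or> h - hh < eta Zf e h" using ep(4) pos unfolding et by simp
  show "eta Zf e h \<le> 4 * h" using u1 h pos by auto
  show "min (C3/2) (min c0 (1/2)) * h \<le> eta Zf e h"
  proof (cases "h \<le> 2 * hh")
    case True
    have "min (C3/2) (min c0 (1/2)) * h \<le> (C3/2) * h" using h pos by (intro mult_right_mono) auto
    also have "\<dots> \<le> (C3/2) * (2 * hh)" using True pos by (intro mult_left_mono) auto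
    finally show ?thesis using l1 by simp
  next
    case False
    then have c: "c0 * h \<le> 1" using big by simp
    show ?thesis
    proof (cases "eta Zf e h = 1")
      case True
      have "min (C3/2) (min c0 (1/2)) * h \<le> c0 * h" using h pos by (intro mult_right_mono) auto
      then show ?thesis using c True by simp
    next
      case False
      then have "h - hh < eta Zf e h" using d1 by simp
      moreover have "min (C3/2) (min c0 (1/2)) * h \<le> (1/2) * h" using h pos by (intro mult_right_mono) auto
      ultimately show ?thesis using \<open>\<not> h \<le> 2 * hh\<close> by simp
    qed
  qed
qed

lemma hlev_facts:
  fixes C3 c0 hh :: real
  assumes pos: "0 < C3" "0 < c0" "0 < hh" and L: "1 \<le> L"
    and bpf: "breakpoints_ok (Zc (1::nat) L) (C3 * hh) hh"
    and bpk: "\<forall>k\<in>{1..L}. breakpoints_ok (Zc 1 k) (c0 * hlev L hh k) (hlev L hh k)"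
    and l: "l \<in> {1..L+1}"
  shows "0 < hlev L hh l" "hh / 4 \<le> hlev L hh l" "hlev L hh l \<le> 1/c0 + 1/C3"
    "2 * hh < hlev L hh l \<Longrightarrow> c0 * hlev L hh l \<le> 1"
proof -
  have hh1: "C3 * hh \<le> 1" using bp_first[OF bpf] by linarith
  then have hhC: "hh \<le> 1 / C3" using pos by (simp add: field_simps)
  have c0C: "0 < 1/c0" "0 < 1/C3" using pos by auto
  show "0 < hlev L hh l" unfolding hlev_def using pos by simp
  have "(hlev L hh l = hh / 4) \<or> (hh \<le> hlev L hh l \<and> c0 * hlev L hh l \<le> 1)"
  proof (cases "l = L + 1")
    case True
    have "real L - real l = -1" using True by simp
    then have "hlev L hh l = 4 powr (-1) * hh" unfolding hlev_def by simp
    also have "4 powr (-1::real) = 1/4" by (simp add: powr_minus_divide)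
    finally show ?thesis by simp
  next
    case False
    then have lL: "l \<in> {1..L}" using l by auto
    from bp_first[OF bpk[rule_format, OF lL]] have "c0 * hlev L hh l \<le> 1" by linarith
    moreover have "1 \<le> 4 powr (real L - real l)" using lL by (intro ge_one_powr_ge_zero) auto
    then have "1 * hh \<le> hlev L hh l" unfolding hlev_def using pos by (intro mult_right_mono) auto
    ultimately show ?thesis by simp
  qed
  then have D: "(hlev L hh l = hh / 4) \<or> (hh \<le> hlev L hh l \<and> hlev L hh l \<le> 1/c0 \<and> c0 * hlev L hh l \<le> 1)"
    using pos by (auto simp: field_simps)
  show "hh / 4 \<le> hlev L hh l" using D pos by auto
  show "hlev L hh l \<le> 1/c0 + 1/C3"
  proof (cases "hlev L hh l = hh / 4")
    case True then show ?thesis using hhC c0C pos by linarith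
  next
    case False then have "hlev L hh l \<le> 1/c0" using D by auto
    then show ?thesis using c0C by linarith
  qed
  show "c0 * hlev L hh l \<le> 1" if "2 * hh < hlev L hh l" using D pos that by auto
qed

definition exd :: "nat \<Rightarrow> nat" where "exd d = (if d \<le> 2 then 1 else 3)"
definition cxd :: "nat \<Rightarrow> bool" where "cxd d = (3 \<le> d)"
definition eyd :: "nat \<Rightarrow> nat" where "eyd d = (if d = 2 \<or> d = 3 then 2 else 4)"
definition cyd :: "nat \<Rightarrow> bool" where "cyd d = (d = 2 \<or> d = 3)"

lemma vext_eq:
  assumes d: "d \<in> {1..4::nat}"
  shows "vext p Zf h d w = (\<lambda>z. w (gamma (real d - 1)) * Fk p (eta Zf (exd d) h) (rf (cxd d) (fst z))
                                 * Fk p (eta Zf (eyd d) h) (rf (cyd d) (snd z)))"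
proof
  fix z :: "real \<times> real"
  consider "d = 1" | "d = 2" | "d = 3" | "d = 4" using d by fastforce
  then show "vext p Zf h d w z = w (gamma (real d - 1)) * Fk p (eta Zf (exd d) h) (rf (cxd d) (fst z))
                                 * Fk p (eta Zf (eyd d) h) (rf (cyd d) (snd z))"
    by cases (simp_all add: vext_def theta_def prev_side_def side_dist_def Fk_def rf_def exd_def cxd_def eyd_def cyd_def mult_ac)
qed

lemma bp_zok: "breakpoints_ok Z lo hi \<Longrightarrow> zok Z"
  unfolding breakpoints_ok_def zok_def by auto

lemma K_bound:
  fixes pr :: real
  assumes V: "w \<in> trace_space (tensor_space (spline_space p Z1 m1) (spline_space p Z2 m2))"
    and Z1: "zok Z1" and Z2: "zok Z2" and d: "d \<in> {1..4::nat}"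
    and h: "0 < h" "h \<le> H0" and pr: "1 \<le> pr"
  shows "(w (gamma (real d - 1)))^2 \<le> 2 * (1 + H0) * (h / pr * side_H1sq d w + pr / h * side_L2sq d w)"
proof -
  have pw: "PW (real d - 1) (real d - 1 + 1) (\<lambda>t. w (gamma t))" by (rule trace_PW[OF V Z1 Z2 d])
  from trace_bound[OF pw h pr] show ?thesis unfolding side_H1sq_def side_L2sq_def by simp
qed

lemma Wlev_trace:
  assumes bpf: "\<forall>e\<in>{1,2}. breakpoints_ok (Zc e L) lo hi \<and> mult_ok p (Zc e L) (mf e)"
    and bpk: "\<forall>e\<in>{1,2}. \<forall>k\<in>{1..L}. breakpoints_ok (Zc e k) (lo' k) (hi' k)"
    and l: "l \<in> {1..L+1}" and w: "w \<in> Wlev p L Zc mf l"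
  shows "\<exists>Z1 Z2 m1 m2. zok Z1 \<and> zok Z2 \<and> w \<in> trace_space (tensor_space (spline_space p Z1 m1) (spline_space p Z2 m2))"
proof (cases "l = L + 1")
  case True
  then have "w \<in> trace_space (tensor_space (spline_space p (Zc 1 L) (mf 1)) (spline_space p (Zc 2 L) (mf 2)))"
    using w unfolding Wlev_def by simp
  moreover have "zok (Zc 1 L)" "zok (Zc 2 L)" using bpf bp_zok by auto
  ultimately show ?thesis by blast
next
  case False
  then have lL: "l \<in> {1..L}" using l by auto
  have "w \<in> trace_space (tensor_space (spline_space p (Zc 1 l) (\<lambda>_. 1)) (spline_space p (Zc 2 l) (\<lambda>_. 1)))"
    using w False unfolding Wlev_def by simp
  moreover have "zok (Zc 1 l)" "zok (Zc 2 l)" using bpk lL by (meson bp_zok insertCI)+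
  ultimately show ?thesis by blast
qed

theorem mainTheorem10:
  fixes C3 c0 :: real
  assumes "0 < C3" and "0 < c0"
  shows "\<exists>c::real. \<forall>(p::nat) (hh::real) (L::nat) (Zc::nat \<Rightarrow> nat \<Rightarrow> real set)
      (mf::nat \<Rightarrow> real \<Rightarrow> nat) (l::nat) (n::nat) (d::nat)
      (w::real \<times> real \<Rightarrow> real) (q::real \<times> real \<Rightarrow> real).
    1 \<le> p \<and> 0 < hh \<and> 1 \<le> L \<and>
    (\<forall>e\<in>{1,2}. breakpoints_ok (Zc e L) (C3 * hh) hh \<and> mult_ok p (Zc e L) (mf e)) \<and>
    (\<forall>e\<in>{1,2}. \<forall>k\<in>{1..L}. breakpoints_ok (Zc e k) (c0 * hlev L hh k) (hlev L hh k)) \<and>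
    (\<forall>e\<in>{1,2}. \<forall>k\<in>{1..<L}. Zc e k \<subseteq> Zc e (Suc k)) \<and>
    l \<in> {1..L+1} \<and> n \<in> {1..L+1} \<and> d \<in> {1..4} \<and>
    w \<in> Wlev p L Zc mf l \<and> q \<in> Wlev p L Zc mf n
    \<longrightarrow>
    \<bar>h1_inner (vext p (\<lambda>e. Zc e L) (hlev L hh l) d w) (vext p (\<lambda>e. Zc e L) (hlev L hh n) d q)\<bar>
      \<le> c * (min (hlev L hh l) (hlev L hh n) / max (hlev L hh l) (hlev L hh n)) *
         (hlev L hh l / real p * side_H1sq d w + hlev L hh n / real p * side_H1sq d q
          + real p / hlev L hh l * side_L2sq d w + real p / hlev L hh n * side_L2sq d q)"
proof -
  define \<kappa> where "\<kappa> = min (C3/2) (min c0 (1/2))"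
  define H0 where "H0 = 1/c0 + 1/C3"
  define CT where "CT = 2 * (1 + H0)"
  have \<kappa>0: "0 < \<kappa>" unfolding \<kappa>_def using assms by simp
  have CT0: "0 \<le> CT" unfolding CT_def H0_def using assms by simp
  show ?thesis
  proof (intro exI[of _ "8 * CT / \<kappa>"] allI impI)
    fix p :: nat and hh :: real and L :: nat and Zc :: "nat \<Rightarrow> nat \<Rightarrow> real set" and mf :: "nat \<Rightarrow> real \<Rightarrow> nat"
      and l n d :: nat and w q :: "real \<times> real \<Rightarrow> real"
    assume A: "1 \<le> p \<and> 0 < hh \<and> 1 \<le> L \<and>
      (\<forall>e\<in>{1,2}. breakpoints_ok (Zc e L) (C3 * hh) hh \<and> mult_ok p (Zc e L) (mf e)) \<and>
      (\<forall>e\<in>{1,2}. \<forall>k\<in>{1..L}. breakpoints_ok (Zc e k) (c0 * hlev L hh k) (hlev L hh k)) \<and>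
      (\<forall>e\<in>{1,2}. \<forall>k\<in>{1..<L}. Zc e k \<subseteq> Zc e (Suc k)) \<and>
      l \<in> {1..L+1} \<and> n \<in> {1..L+1} \<and> d \<in> {1..4} \<and>
      w \<in> Wlev p L Zc mf l \<and> q \<in> Wlev p L Zc mf n"
    then have p1: "1 \<le> p" and hh0: "0 < hh" and L1: "1 \<le> L"
      and bpf: "\<forall>e\<in>{1,2}. breakpoints_ok (Zc e L) (C3 * hh) hh \<and> mult_ok p (Zc e L) (mf e)"
      and bpk: "\<forall>e\<in>{1,2}. \<forall>k\<in>{1..L}. breakpoints_ok (Zc e k) (c0 * hlev L hh k) (hlev L hh k)"
      and l: "l \<in> {1..L+1}" and n: "n \<in> {1..L+1}" and d: "d \<in> {1..4}"
      and w: "w \<in> Wlev p L Zc mf l" and q: "q \<in> Wlev p L Zc mf n"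
      by auto
    define Zf where "Zf = (\<lambda>e. Zc e L)"
    have bp1: "breakpoints_ok (Zc 1 L) (C3 * hh) hh" and bp2: "breakpoints_ok (Zc 2 L) (C3 * hh) hh"
      using bpf by auto
    have bpk1: "\<forall>k\<in>{1..L}. breakpoints_ok (Zc 1 k) (c0 * hlev L hh k) (hlev L hh k)" using bpk by auto
    note hl = hlev_facts[where Zc=Zc, OF assms(1,2) hh0 L1 bp1 bpk1 l]
    note hn = hlev_facts[where Zc=Zc, OF assms(1,2) hh0 L1 bp1 bpk1 n]
    define hL where "hL = hlev L hh l"
    define hN where "hN = hlev L hh n"
    have tb: "breakpoints_ok (trans_dists Zf e) (C3 * hh) hh" if "e \<in> {1..4}" for e
      by (rule trans_bp[OF that]) (use bp1 bp2 in \<open>auto simp: Zf_def\<close>)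
    have ed: "exd d \<in> {1..4}" "eyd d \<in> {1..4}" unfolding exd_def eyd_def by auto
    note eb = eta_bound[OF tb assms(1,2) hh0]
    define al where "al = eta Zf (exd d) hL"
    define an where "an = eta Zf (exd d) hN"
    define bl where "bl = eta Zf (eyd d) hL"
    define bn where "bn = eta Zf (eyd d) hN"
    have al: "\<kappa> * hL \<le> al" "al \<le> 4 * hL" unfolding al_def \<kappa>_def hL_def using eb[OF ed(1) hl(2) hl(4)] by auto
    have an: "\<kappa> * hN \<le> an" "an \<le> 4 * hN" unfolding an_def \<kappa>_def hN_def using eb[OF ed(1) hn(2) hn(4)] by auto
    have bl: "\<kappa> * hL \<le> bl" "bl \<le> 4 * hL" unfolding bl_def \<kappa>_def hL_def using eb[OF ed(2) hl(2) hl(4)] by auto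
    have bn: "\<kappa> * hN \<le> bn" "bn \<le> 4 * hN" unfolding bn_def \<kappa>_def hN_def using eb[OF ed(2) hn(2) hn(4)] by auto
    have hpos: "0 < hL" "0 < hN" unfolding hL_def hN_def using hl(1) hn(1) by auto
    have etapos: "0 < al" "0 < an" "0 < bl" "0 < bn"
      using al an bl bn hpos \<kappa>0 by (auto intro: less_le_trans[OF mult_pos_pos])
    define Kw where "Kw = w (gamma (real d - 1))"
    define Kq where "Kq = q (gamma (real d - 1))"
    have ve: "vext p (\<lambda>e. Zc e L) (hlev L hh l) d w = (\<lambda>z. Kw * Fk p al (rf (cxd d) (fst z)) * Fk p bl (rf (cyd d) (snd z)))"
      unfolding vext_eq[OF d] Kw_def al_def bl_def Zf_def hL_def ..
    have vq: "vext p (\<lambda>e. Zc e L) (hlev L hh n) d q = (\<lambda>z. Kq * Fk p an (rf (cxd d) (fst z)) * Fk p bn (rf (cyd d) (snd z)))"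
      unfolding vext_eq[OF d] Kq_def an_def bn_def Zf_def hN_def ..
    have core: "\<bar>h1_inner (vext p (\<lambda>e. Zc e L) (hlev L hh l) d w) (vext p (\<lambda>e. Zc e L) (hlev L hh n) d q)\<bar>
       \<le> \<bar>Kw * Kq\<bar> * (2 * (min bl bn / max al an) + 2 * (min al an / max bl bn))"
      unfolding ve vq by (rule core2D[OF p1 etapos])
    define r where "r = min hL hN / max hL hN"
    have r0: "0 \<le> r" unfolding r_def using hpos by simp
    have rat: "min x2 y2 / max x1 y1 \<le> (4 / \<kappa>) * r"
      if "\<kappa> * hL \<le> x1" "\<kappa> * hN \<le> y1" "x2 \<le> 4 * hL" "y2 \<le> 4 * hN" "0 < x2" "0 < y2" for x1 y1 x2 y2
    proof -
      have "min x2 y2 / max x1 y1 \<le> (4 * min hL hN) / (\<kappa> * max hL hN)"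
      proof (rule frac_le)
        show "0 \<le> 4 * min hL hN" using hpos by simp
        show "min x2 y2 \<le> 4 * min hL hN" using that by linarith
        show "0 < \<kappa> * max hL hN" using hpos \<kappa>0 by simp
        show "\<kappa> * max hL hN \<le> max x1 y1" using that by (auto simp: max_def)
      qed
      also have "\<dots> = (4 / \<kappa>) * r" unfolding r_def by simp
      finally show ?thesis .
    qed
    have B: "2 * (min bl bn / max al an) + 2 * (min al an / max bl bn) \<le> (16 / \<kappa>) * r"
      using rat[OF al(1) an(1) bl(2) bn(2) etapos(3,4)] rat[OF bl(1) bn(1) al(2) an(2) etapos(1,2)] by simp
    have pr: "1 \<le> real p" using p1 by simp
    obtain Z1 Z2 m1 m2 where wz: "zok Z1" "zok Z2" "w \<in> trace_space (tensor_space (spline_space p Z1 m1) (spline_space p Z2 m2))"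
      using Wlev_trace[OF bpf bpk l w] by blast
    obtain Z1' Z2' m1' m2' where qz: "zok Z1'" "zok Z2'" "q \<in> trace_space (tensor_space (spline_space p Z1' m1') (spline_space p Z2' m2'))"
      using Wlev_trace[OF bpf bpk n q] by blast
    define Aw where "Aw = hL / real p * side_H1sq d w + real p / hL * side_L2sq d w"
    define Aq where "Aq = hN / real p * side_H1sq d q + real p / hN * side_L2sq d q"
    have hL3: "hL \<le> H0" unfolding hL_def H0_def by (rule hl(3))
    have hN3: "hN \<le> H0" unfolding hN_def H0_def by (rule hn(3))
    have Kw2: "Kw^2 \<le> CT * Aw" unfolding Kw_def CT_def Aw_def
      by (rule K_bound[OF wz(3) wz(1,2) d hpos(1) hL3 pr])
    have Kq2: "Kq^2 \<le> CT * Aq" unfolding Kq_def CT_def Aq_def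
      by (rule K_bound[OF qz(3) qz(1,2) d hpos(2) hN3 pr])
    have P: "\<bar>Kw * Kq\<bar> \<le> CT * (Aw + Aq) / 2"
    proof -
      have "2 * \<bar>Kw * Kq\<bar> \<le> Kw^2 + Kq^2"
        using sum_squares_bound[of "\<bar>Kw\<bar>" "\<bar>Kq\<bar>"] by (simp add: abs_mult power2_abs)
      then show ?thesis using Kw2 Kq2 by (simp add: distrib_left)
    qed
    have "\<bar>h1_inner (vext p (\<lambda>e. Zc e L) (hlev L hh l) d w) (vext p (\<lambda>e. Zc e L) (hlev L hh n) d q)\<bar>
       \<le> \<bar>Kw * Kq\<bar> * ((16 / \<kappa>) * r)"
      using core B by (meson abs_ge_zero mult_left_mono order_trans)
    also have "\<dots> \<le> (CT * (Aw + Aq) / 2) * ((16 / \<kappa>) * r)"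
      using P r0 \<kappa>0 by (intro mult_right_mono) auto
    also have "\<dots> = 8 * CT / \<kappa> * r * (Aw + Aq)" using \<kappa>0 by (simp add: field_simps)
    finally show "\<bar>h1_inner (vext p (\<lambda>e. Zc e L) (hlev L hh l) d w) (vext p (\<lambda>e. Zc e L) (hlev L hh n) d q)\<bar>
      \<le> 8 * CT / \<kappa> * (min (hlev L hh l) (hlev L hh n) / max (hlev L hh l) (hlev L hh n)) *
         (hlev L hh l / real p * side_H1sq d w + hlev L hh n / real p * side_H1sq d q
          + real p / hlev L hh l * side_L2sq d w + real p / hlev L hh n * side_L2sq d q)"
      unfolding r_def Aw_def Aq_def hL_def hN_def by (simp add: algebra_simps)
  qed
qed

end
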